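(* In the setting described in the context, assume $\beta\colon\Gamma\to\mathrm M_{\mathcal U}$ satisfies $\alpha(g,h)=\varphi_{\mathcal U}(g)\beta(h)\varphi_{\mathcal U}(g)^*-\beta(gh)+\beta(g)$ for all $g,h$ and $\beta(g)^*=-\beta(g)$ for all $g$. For each $g$ let $(\beta_n(g))_n$, $\beta_n(g)\in\mathrm M_{k_n}(\mathbb C)$ with $\beta_n(g)^*=-\beta_n(g)$, be a bounded sequence representing $\beta(g)$, and set $\psi_n(g)=\exp(-\mathrm{def}(\varphi_n)\beta_n(g))\tilde\varphi_n(g)$. Then for all $g,h\in\Gamma$, $\|\psi_n(gh)-\psi_n(g)\psi_n(h)\|=o_{\mathcal U}(\mathrm{def}(\varphi_n))$.
   Context: Fix a non-principal ultrafilter $\mathcal U$ on $\mathbb N$; $x_n=O_{\mathcal U}(y_n)$ means $x_n\le Cy_n$ for all $n$ in a set belonging to $\mathcal U$, some constant $C$; $x_n=o_{\mathcal U}(y_n)$ means $x_n=\varepsilon_ny_n$ with $\varepsilon_n\ge0$ and $\lim_{n\to\mathcal U}\varepsilon_n=0$. Let $\Gamma=\langle S\mid R\rangle$ be finitely presented ($S,R$ finite, $\mathbb F_S$ free on $S$). For each $k$ fix a unitarily invariant, submultiplicative norm $\|\cdot\|$ on $\mathrm M_k(\mathbb C)$. For $\varphi\colon S\to\mathrm U(k)$ (extended to $\mathbb F_S$), $\mathrm{def}(\varphi)=\max_{r\in R}\|\varphi(r)-1_k\|$. Let $\varphi_n\colon S\to\mathrm U(k_n)$ with $\lim_{n\to\mathcal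 U}\mathrm{def}(\varphi_n)=0$. $\mathrm M_{\mathcal U}$ is the Banach space of bounded sequences $(T_n)$, $T_n\in\mathrm M_{k_n}(\mathbb C)$, modulo those with $\lim_{n\to\mathcal U}\|T_n\|=0$; $\mathrm U_{\mathcal U}$ is $\prod_n\mathrm U(k_n)$ modulo sequences with $\lim_{n\to\mathcal U}\|u_n-1\|=0$, acting on $\mathrm M_{\mathcal U}$ by left/right multiplication; $\varphi_{\mathcal U}\colon\Gamma\to\mathrm U_{\mathcal U}$ is the induced homomorphism. Fix a section $\sigma\colon\Gamma\to\mathbb F_S$ of the canonical surjection and $\tilde\varphi_n\colon\Gamma\to\mathrm U(k_n)$ with $\tilde\varphi_n(1_\Gamma)=1$, $\tilde\varphi_n(g^{-1})=\tilde\varphi_n(g)^*$, $\|\varphi_n(\sigma(g))-\tilde\varphi_n(g)\|=O_{\mathcal U}(\mathrm{def}(\varphi_n))$. Let $c_n(g,h)=(\tilde\varphi_n(g)\tilde\varphi_n(h)-\tilde\varphi_n(gh))/\mathrm{def}(\varphi_n)$ if $\mathrm{def}(\varphi_n)>0$, else $0$; $c(g,h)\in\mathrm M_{\mathcal U}$ its class; $\alpha(g,h)=c(g,h)\varphi_{\mathcal U}(gh)^*$. *)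

theory Defs
  imports "HOL-Algebra.Group" "Jordan_Normal_Form.Schur_Decomposition"
begin

definition nonprincipal_ultrafilter :: "nat filter \<Rightarrow> bool" where
  "nonprincipal_ultrafilter F \<longleftrightarrow>
     F \<noteq> bot \<and> (\<forall>P. eventually P F \<or> eventually (\<lambda>x. \<not> P x) F)
     \<and> (\<forall>m. eventually (\<lambda>n. n \<noteq> m) F)"

text \<open>Equality of classes in the ultraproduct Banach space M_U (or of classes of
  unitaries in U_U): two sequences represent the same element iff the
  U-limit of the norms of their differences is 0.\<close>
definition ueq :: "nat filter \<Rightarrow> (complex mat \<Rightarrow> real) \<Rightarrow> (nat \<Rightarrow> complex mat) \<Rightarrow> (nat \<Rightarrow> complex mat) \<Rightarrow> bool" where
  "ueq F nrm x y \<longleftrightarrow> ((\<lambda>n. nrm (x n - y n)) \<longlongrightarrow> 0) F"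

definition small_o_U :: "nat filter \<Rightarrow> (nat \<Rightarrow> real) \<Rightarrow> (nat \<Rightarrow> real) \<Rightarrow> bool" where
  "small_o_U F x y \<longleftrightarrow> (\<exists>eps. (\<forall>n. eps n \<ge> 0) \<and> (eps \<longlongrightarrow> 0) F
        \<and> eventually (\<lambda>n. x n = eps n * y n) F)"

definition unitary_mat :: "nat \<Rightarrow> complex mat \<Rightarrow> bool" where
  "unitary_mat k A \<longleftrightarrow> A \<in> carrier_mat k k \<and> mat_adjoint A * A = 1\<^sub>m k \<and> A * mat_adjoint A = 1\<^sub>m k"

definition unitarily_invariant_submult_norms :: "(complex mat \<Rightarrow> real) \<Rightarrow> bool" where
  "unitarily_invariant_submult_norms nrm \<longleftrightarrow> (\<forall>k.
     (\<forall>A \<in> carrier_mat k k. 0 \<le> nrm A \<and> (nrm A = 0 \<longleftrightarrow> A = 0\<^sub>m k k)) \<and>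
     (\<forall>A \<in> carrier_mat k k. \<forall>c. nrm (c \<cdot>\<^sub>m A) = cmod c * nrm A) \<and>
     (\<forall>A \<in> carrier_mat k k. \<forall>B \<in> carrier_mat k k. nrm (A + B) \<le> nrm A + nrm B) \<and>
     (\<forall>A \<in> carrier_mat k k. \<forall>B \<in> carrier_mat k k. nrm (A * B) \<le> nrm A * nrm B) \<and>
     (\<forall>A \<in> carrier_mat k k. \<forall>V W. unitary_mat k V \<longrightarrow> unitary_mat k W \<longrightarrow> nrm (V * A * W) = nrm A))"

definition mat_exp :: "complex mat \<Rightarrow> complex mat" where
  "mat_exp A = mat (dim_row A) (dim_col A) (\<lambda>(i,j). \<Sum>m. (A ^\<^sub>m m) $$ (i,j) / of_nat (fact m))"

text \<open>Words over S: a letter (s, True) stands for s, (s, False) for s^{-1}.\<close>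
type_synonym 's word = "('s \<times> bool) list"

definition words :: "'s set \<Rightarrow> 's word set" where
  "words S = {w. \<forall>x \<in> set w. fst x \<in> S}"

definition word_inv :: "'s word \<Rightarrow> 's word" where
  "word_inv w = rev (map (\<lambda>(s,b). (s, \<not> b)) w)"

text \<open>Words representing elements of the normal closure of R in the free group F_S.\<close>
inductive_set rel_triv :: "'s set \<Rightarrow> 's word set \<Rightarrow> 's word set" for S R where
  nil: "[] \<in> rel_triv S R"
| rel: "r \<in> R \<Longrightarrow> r \<in> rel_triv S R"
| rel_inv: "r \<in> R \<Longrightarrow> word_inv r \<in> rel_triv S R"
| app: "u \<in> rel_triv S R \<Longrightarrow> v \<in> rel_triv S R \<Longrightarrow> u @ v \<in> rel_triv S R"
| conj: "w \<in> rel_triv S R \<Longrightarrow> x \<in> words S \<Longrightarrow> x @ w @ word_inv x \<in> rel_triv S R"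
| ins: "u @ v \<in> rel_triv S R \<Longrightarrow> s \<in> S \<Longrightarrow> u @ [(s,b),(s,\<not> b)] @ v \<in> rel_triv S R"
| del: "u @ [(s,b),(s,\<not> b)] @ v \<in> rel_triv S R \<Longrightarrow> u @ v \<in> rel_triv S R"

text \<open>pi : words over S -> G induces an isomorphism F_S / <<R>> = G, i.e. G = <S | R>
  is a finite presentation with canonical surjection pi.\<close>
definition is_presentation :: "('g, 'm) monoid_scheme \<Rightarrow> 's set \<Rightarrow> 's word set \<Rightarrow> ('s word \<Rightarrow> 'g) \<Rightarrow> bool" where
  "is_presentation G S R \<pi> \<longleftrightarrow> group G \<and> finite S \<and> finite R \<and> R \<subseteq> words S \<and>
     \<pi> ` words S = carrier G \<and> \<pi> [] = \<one>\<^bsub>G\<^esub> \<and>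
     (\<forall>u \<in> words S. \<forall>v \<in> words S. \<pi> (u @ v) = \<pi> u \<otimes>\<^bsub>G\<^esub> \<pi> v) \<and>
     (\<forall>s \<in> S. \<pi> [(s, False)] = inv\<^bsub>G\<^esub> (\<pi> [(s, True)])) \<and>
     (\<forall>w \<in> words S. \<pi> w = \<one>\<^bsub>G\<^esub> \<longleftrightarrow> w \<in> rel_triv S R)"

definition word_eval :: "nat \<Rightarrow> ('s \<Rightarrow> complex mat) \<Rightarrow> 's word \<Rightarrow> complex mat" where
  "word_eval k f w = foldr (\<lambda>(s,b) M. (if b then f s else mat_adjoint (f s)) * M) w (1\<^sub>m k)"

definition deficiency :: "(complex mat \<Rightarrow> real) \<Rightarrow> nat \<Rightarrow> 's word set \<Rightarrow> ('s \<Rightarrow> complex mat) \<Rightarrow> real" where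
  "deficiency nrm k R f = Max (insert 0 ((\<lambda>r. nrm (word_eval k f r - 1\<^sub>m k)) ` R))"

definition coc :: "(complex mat \<Rightarrow> real) \<Rightarrow> (nat \<Rightarrow> nat) \<Rightarrow> 's word set \<Rightarrow> (nat \<Rightarrow> 's \<Rightarrow> complex mat)
     \<Rightarrow> ('g, 'm) monoid_scheme \<Rightarrow> (nat \<Rightarrow> 'g \<Rightarrow> complex mat) \<Rightarrow> nat \<Rightarrow> 'g \<Rightarrow> 'g \<Rightarrow> complex mat" where
  "coc nrm k R \<phi> G pt n g h =
     (let d = deficiency nrm (k n) R (\<phi> n) in
      if d > 0 then (1 / complex_of_real d) \<cdot>\<^sub>m (pt n g * pt n h - pt n (g \<otimes>\<^bsub>G\<^esub> h))
      else 0\<^sub>m (k n) (k n))"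

definition psi :: "(complex mat \<Rightarrow> real) \<Rightarrow> (nat \<Rightarrow> nat) \<Rightarrow> 's word set \<Rightarrow> (nat \<Rightarrow> 's \<Rightarrow> complex mat)
     \<Rightarrow> (nat \<Rightarrow> 'g \<Rightarrow> complex mat) \<Rightarrow> (nat \<Rightarrow> 'g \<Rightarrow> complex mat) \<Rightarrow> nat \<Rightarrow> 'g \<Rightarrow> complex mat" where
  "psi nrm k R \<phi> \<beta> pt n g =
     mat_exp ((- complex_of_real (deficiency nrm (k n) R (\<phi> n))) \<cdot>\<^sub>m \<beta> n g) * pt n g"

end

theory Submission
  imports Defs
begin

lemma adj_dims[simp]: "dim_row (mat_adjoint A) = dim_col A" "dim_col (mat_adjoint A) = dim_row A"
  unfolding mat_adjoint_def by auto

lemma adj_index[simp]: "i < dim_col A \<Longrightarrow> j < dim_row A \<Longrightarrow> mat_adjoint A $$ (i,j) = cnj (A $$ (j,i))"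
  unfolding mat_adjoint_def by (simp add: mat_of_rows_index conjugate_complex_def)

lemma adj_carrier[simp]: "A \<in> carrier_mat n m \<Longrightarrow> mat_adjoint A \<in> carrier_mat m n"
  unfolding carrier_mat_def by simp

lemma adj_adj[simp]: "mat_adjoint (mat_adjoint A) = (A :: complex mat)"
  by (rule eq_matI) auto

lemma adj_one[simp]: "mat_adjoint (1\<^sub>m n) = (1\<^sub>m n :: complex mat)"
  by (rule eq_matI) auto

lemma adj_mult: assumes "A \<in> carrier_mat n m" "B \<in> carrier_mat m p"
  shows "mat_adjoint (A * B) = mat_adjoint B * mat_adjoint (A :: complex mat)"
proof (rule eq_matI)
  fix i j assume ij: "i < dim_row (mat_adjoint B * mat_adjoint A)" "j < dim_col (mat_adjoint B * mat_adjoint A)"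
  then have i: "i < p" and j: "j < n" using assms by auto
  have "mat_adjoint (A * B) $$ (i,j) = cnj (\<Sum>l<m. A $$ (j,l) * B $$ (l,i))"
    using assms i j by (simp add: scalar_prod_def sum.atLeast0_lessThan_Suc atLeast0LessThan)
  also have "\<dots> = (\<Sum>l<m. cnj (B $$ (l,i)) * cnj (A $$ (j,l)))" by (simp add: mult.commute)
  also have "\<dots> = (mat_adjoint B * mat_adjoint A) $$ (i,j)"
    using assms i j by (simp add: scalar_prod_def atLeast0LessThan)
  finally show "mat_adjoint (A * B) $$ (i,j) = (mat_adjoint B * mat_adjoint A) $$ (i,j)" .
next
  show "dim_row (mat_adjoint (A * B)) = dim_row (mat_adjoint B * mat_adjoint A)" using assms by simp
next
  show "dim_col (mat_adjoint (A * B)) = dim_col (mat_adjoint B * mat_adjoint A)" using assms by simp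
qed

lemma kk_mult[simp]: "A \<in> carrier_mat k k \<Longrightarrow> B \<in> carrier_mat k k \<Longrightarrow> A * B \<in> carrier_mat k k"
  by (rule mult_carrier_mat)

definition sq :: "nat \<Rightarrow> complex mat \<Rightarrow> bool" where "sq k A \<longleftrightarrow> A \<in> carrier_mat k k"



lemma sq_closed:
  "sq k A \<Longrightarrow> sq k B \<Longrightarrow> sq k (A + B)"
  "sq k A \<Longrightarrow> sq k B \<Longrightarrow> sq k (A - B)"
  "sq k A \<Longrightarrow> sq k B \<Longrightarrow> sq k (A * B)"
  "sq k A \<Longrightarrow> sq k (- A)"
  "sq k A \<Longrightarrow> sq k (a \<cdot>\<^sub>m A)"
  "sq k A \<Longrightarrow> sq k (mat_adjoint A)"
  "sq k (1\<^sub>m k)" "sq k (0\<^sub>m k k)"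
  unfolding sq_def
  apply (erule add_carrier_mat[OF _]; assumption)
  apply (erule minus_carrier_mat[OF _]; assumption)
  apply (erule mult_carrier_mat; assumption)
  apply (erule uminus_carrier_mat)
  apply (erule smult_carrier_mat)
  apply (erule adj_carrier)
  apply (rule one_carrier_mat)
  apply (rule zero_carrier_mat)
  done

lemma kk_simps:
  fixes A B C :: "complex mat"
  shows "sq k A \<Longrightarrow> sq k B \<Longrightarrow> sq k C \<Longrightarrow> (A + B) * C = A * C + B * C"
    "sq k A \<Longrightarrow> sq k B \<Longrightarrow> sq k C \<Longrightarrow> A * (B + C) = A * B + A * C"
    "sq k A \<Longrightarrow> sq k B \<Longrightarrow> sq k C \<Longrightarrow> (A - B) * C = A * C - B * C"
    "sq k A \<Longrightarrow> sq k B \<Longrightarrow> sq k C \<Longrightarrow> A * (B - C) = A * B - A * C"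
    "sq k A \<Longrightarrow> sq k B \<Longrightarrow> (a \<cdot>\<^sub>m A) * B = a \<cdot>\<^sub>m (A * B)"
    "sq k A \<Longrightarrow> sq k B \<Longrightarrow> A * (a \<cdot>\<^sub>m B) = a \<cdot>\<^sub>m (A * B)"
    "sq k A \<Longrightarrow> sq k B \<Longrightarrow> sq k C \<Longrightarrow> (A * B) * C = A * (B * C)"
    "sq k A \<Longrightarrow> sq k B \<Longrightarrow> (- A) * B = - (A * B)"
    "sq k A \<Longrightarrow> sq k B \<Longrightarrow> A * (- B) = - (A * B)"
    "sq k A \<Longrightarrow> A * 1\<^sub>m k = A" "sq k A \<Longrightarrow> 1\<^sub>m k * A = A"
  unfolding sq_def
  apply (rule add_mult_distrib_mat; assumption)
  apply (rule mult_add_distrib_mat; assumption)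
  apply (rule minus_mult_distrib_mat; assumption)
  apply (rule mult_minus_distrib_mat; assumption)
  apply (rule mult_smult_assoc_mat; assumption)
  apply (rule mult_smult_distrib; assumption)
  apply (rule assoc_mult_mat; assumption)
  apply (rule eq_matI; simp)
  apply (rule eq_matI; simp)
  apply (erule right_mult_one_mat)
  apply (erule left_mult_one_mat)
  done

lemma sq_dims: "sq k A \<Longrightarrow> dim_row A = k" "sq k A \<Longrightarrow> dim_col A = k"
  unfolding sq_def by auto

lemma unitary_carrier: "unitary_mat k U \<Longrightarrow> U \<in> carrier_mat k k"
  unfolding unitary_mat_def by simp
lemma unitary_l: "unitary_mat k U \<Longrightarrow> mat_adjoint U * U = 1\<^sub>m k"
  unfolding unitary_mat_def by simp
lemma unitary_r: "unitary_mat k U \<Longrightarrow> U * mat_adjoint U = 1\<^sub>m k"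
  unfolding unitary_mat_def by simp
lemma unitary_l2: assumes "unitary_mat k U" "sq k X" shows "mat_adjoint U * (U * X) = X"
proof -
  have U: "U \<in> carrier_mat k k" using assms(1) by (rule unitary_carrier)
  have "mat_adjoint U * (U * X) = (mat_adjoint U * U) * X"
    using U assms(2) unfolding sq_def by (simp add: assoc_mult_mat[of _ k k _ k _ k])
  also have "\<dots> = X" using unitary_l[OF assms(1)] assms(2) unfolding sq_def by simp
  finally show ?thesis .
qed
lemma unitary_r2: assumes "unitary_mat k U" "sq k X" shows "U * (mat_adjoint U * X) = X"
proof -
  have U: "U \<in> carrier_mat k k" using assms(1) by (rule unitary_carrier)
  have "U * (mat_adjoint U * X) = (U * mat_adjoint U) * X"
    using U assms(2) unfolding sq_def by (simp add: assoc_mult_mat[of _ k k _ k _ k])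
  also have "\<dots> = X" using unitary_r[OF assms(1)] assms(2) unfolding sq_def by simp
  finally show ?thesis .
qed

lemma unitary_sq: "unitary_mat k U \<Longrightarrow> sq k U" unfolding sq_def by (rule unitary_carrier)

lemma unitary_one: "unitary_mat k (1\<^sub>m k)"
  unfolding unitary_mat_def by simp

lemma uminus_smult: "sq k A \<Longrightarrow> - A = (-1::complex) \<cdot>\<^sub>m A"
  unfolding sq_def by (rule eq_matI) auto

lemma minus_as_add: "sq k A \<Longrightarrow> sq k B \<Longrightarrow> A - B = A + (- B :: complex mat)"
  unfolding sq_def by (rule minus_add_uminus_mat)

context
  fixes nrm :: "complex mat \<Rightarrow> real" and k :: nat
  assumes N: "unitarily_invariant_submult_norms nrm"
begin

lemma n_nonneg: "sq k A \<Longrightarrow> 0 \<le> nrm A"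
  using N unfolding unitarily_invariant_submult_norms_def sq_def by blast

lemma n_zero_iff: "sq k A \<Longrightarrow> nrm A = 0 \<longleftrightarrow> A = 0\<^sub>m k k"
  using N unfolding unitarily_invariant_submult_norms_def sq_def by blast

lemma n_zero: "nrm (0\<^sub>m k k) = 0"
  using n_zero_iff[of "0\<^sub>m k k"] sq_closed(8) by blast

lemma n_smult: "sq k A \<Longrightarrow> nrm (c \<cdot>\<^sub>m A) = cmod c * nrm A"
  using N unfolding unitarily_invariant_submult_norms_def sq_def by blast

lemma n_add: "sq k A \<Longrightarrow> sq k B \<Longrightarrow> nrm (A + B) \<le> nrm A + nrm B"
  using N unfolding unitarily_invariant_submult_norms_def sq_def by blast

lemma n_mult: "sq k A \<Longrightarrow> sq k B \<Longrightarrow> nrm (A * B) \<le> nrm A * nrm B"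
  using N unfolding unitarily_invariant_submult_norms_def sq_def by blast

lemma n_unit: "sq k A \<Longrightarrow> unitary_mat k V \<Longrightarrow> unitary_mat k W \<Longrightarrow> nrm (V * A * W) = nrm A"
  using N unfolding unitarily_invariant_submult_norms_def sq_def by blast

lemma n_uminus: "sq k A \<Longrightarrow> nrm (- A) = nrm A"
  by (simp add: uminus_smult[of k A] n_smult)

lemma n_minus: "sq k A \<Longrightarrow> sq k B \<Longrightarrow> nrm (A - B) \<le> nrm A + nrm B"
  using n_add[of A "- B"] n_uminus[of B] minus_as_add[of k A B] sq_closed(4)[of k B] by simp

lemma n_minus_comm: "sq k A \<Longrightarrow> sq k B \<Longrightarrow> nrm (A - B) = nrm (B - A)"
proof -
  assume a: "sq k A" "sq k B"
  have "B - A = - (A - B)" using a unfolding sq_def by (intro eq_matI) auto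
  then show ?thesis using n_uminus[of "A - B"] sq_closed(2)[OF a] by simp
qed

lemma n_tri: "sq k A \<Longrightarrow> sq k B \<Longrightarrow> sq k C \<Longrightarrow> nrm (A - C) \<le> nrm (A - B) + nrm (B - C)"
proof -
  assume a: "sq k A" "sq k B" "sq k C"
  have "A - C = (A - B) + (B - C)" using a unfolding sq_def by (intro eq_matI) auto
  then show ?thesis using n_add[of "A - B" "B - C"] sq_closed(2) a by simp
qed

lemma n_unit_l: "sq k A \<Longrightarrow> unitary_mat k V \<Longrightarrow> nrm (V * A) = nrm A"
  using n_unit[of A V "1\<^sub>m k"] unitary_one[of k] sq_closed(3)[of k V A] unitary_sq[of k V]
  by (simp add: kk_simps)

lemma n_unit_r: "sq k A \<Longrightarrow> unitary_mat k V \<Longrightarrow> nrm (A * V) = nrm A"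
  using n_unit[of A "1\<^sub>m k" V] unitary_one[of k] unitary_sq[of k V]
  by (simp add: kk_simps)

end

lemma unitary_adj: "unitary_mat k U \<Longrightarrow> unitary_mat k (mat_adjoint U)"
  unfolding unitary_mat_def by simp

lemma unitary_mult: assumes "unitary_mat k U" "unitary_mat k V" shows "unitary_mat k (U * V)"
proof -
  have s: "sq k U" "sq k V" using assms by (simp_all add: unitary_sq)
  have a: "mat_adjoint (U * V) = mat_adjoint V * mat_adjoint U"
    using s unfolding sq_def by (rule adj_mult)
  show ?thesis unfolding unitary_mat_def a
    using s assms sq_closed(3)[OF s]
    by (simp add: sq_def[symmetric] kk_simps[where k=k] sq_closed unitary_l unitary_r unitary_l2 unitary_r2)
qed

lemma word_eval_Nil[simp]: "word_eval k f [] = 1\<^sub>m k"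
  unfolding word_eval_def by simp

lemma word_eval_Cons[simp]: "word_eval k f ((s,b) # w) = (if b then f s else mat_adjoint (f s)) * word_eval k f w"
  unfolding word_eval_def by simp

lemma words_Cons[simp]: "((s,b) # w) \<in> words S \<longleftrightarrow> s \<in> S \<and> w \<in> words S"
  unfolding words_def by auto

lemma words_Nil[simp]: "[] \<in> words S"
  unfolding words_def by auto

lemma words_append[simp]: "(u @ v) \<in> words S \<longleftrightarrow> u \<in> words S \<and> v \<in> words S"
  unfolding words_def by auto

lemma word_inv_Nil[simp]: "word_inv [] = []"
  unfolding word_inv_def by simp

lemma word_inv_Cons[simp]: "word_inv ((s,b) # w) = word_inv w @ [(s, \<not> b)]"
  unfolding word_inv_def by simp

lemma word_inv_append: "word_inv (u @ v) = word_inv v @ word_inv u"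
  unfolding word_inv_def by simp

lemma words_inv[simp]: "w \<in> words S \<Longrightarrow> word_inv w \<in> words S"
  by (induct w) auto

definition unit_on :: "nat \<Rightarrow> 's set \<Rightarrow> ('s \<Rightarrow> complex mat) \<Rightarrow> bool" where
  "unit_on k S f \<longleftrightarrow> (\<forall>s \<in> S. unitary_mat k (f s))"

lemma letter_unitary: "unit_on k S f \<Longrightarrow> s \<in> S \<Longrightarrow> unitary_mat k (if b then f s else mat_adjoint (f s))"
  unfolding unit_on_def by (auto simp: unitary_adj)

lemma word_eval_unitary: "unit_on k S f \<Longrightarrow> w \<in> words S \<Longrightarrow> unitary_mat k (word_eval k f w)"
proof (induct w)
  case Nil then show ?case by (simp add: unitary_one)
next
  case (Cons x w)
  obtain s b where x: "x = (s,b)" by (cases x)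
  have s: "s \<in> S" "w \<in> words S" using Cons x by auto
  show ?case unfolding x word_eval_Cons
    by (rule unitary_mult, rule letter_unitary[OF Cons(2) s(1)], rule Cons(1)[OF Cons(2) s(2)])
qed

lemma word_eval_sq: "unit_on k S f \<Longrightarrow> w \<in> words S \<Longrightarrow> sq k (word_eval k f w)"
  by (rule unitary_sq, rule word_eval_unitary)

lemma word_eval_append: "unit_on k S f \<Longrightarrow> u \<in> words S \<Longrightarrow> v \<in> words S \<Longrightarrow>
   word_eval k f (u @ v) = word_eval k f u * word_eval k f v"
proof (induct u)
  case Nil then show ?case using word_eval_sq[OF Nil(1) Nil(3)] by (simp add: kk_simps)
next
  case (Cons x u)
  obtain s b where x: "x = (s,b)" by (cases x)
  have s: "s \<in> S" "u \<in> words S" using Cons x by auto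
  have l: "sq k (if b then f s else mat_adjoint (f s))"
    by (rule unitary_sq, rule letter_unitary[OF Cons(2) s(1)])
  show ?case using Cons s x
    by (simp add: kk_simps[where k=k] l word_eval_sq[OF Cons(2)])
qed

lemma word_eval_inv: "unit_on k S f \<Longrightarrow> w \<in> words S \<Longrightarrow>
   word_eval k f (word_inv w) = mat_adjoint (word_eval k f w)"
proof (induct w)
  case Nil then show ?case by simp
next
  case (Cons x w)
  obtain s b where x: "x = (s,b)" by (cases x)
  have s: "s \<in> S" "w \<in> words S" using Cons x by auto
  have l: "sq k (if b then f s else mat_adjoint (f s))"
    by (rule unitary_sq, rule letter_unitary[OF Cons(2) s(1)])
  have l2: "sq k (f s)" using Cons(2) s(1) unfolding unit_on_def by (simp add: unitary_sq)
  have we: "sq k (word_eval k f w)" using word_eval_sq[OF Cons(2) s(2)] .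
  let ?L = "if b then f s else mat_adjoint (f s)"
  have L': "(if \<not> b then f s else mat_adjoint (f s)) = mat_adjoint ?L" by simp
  have "word_eval k f (word_inv (x # w)) = word_eval k f (word_inv w) * word_eval k f [(s, \<not> b)]"
    unfolding x word_inv_Cons using s by (intro word_eval_append[OF Cons(2)]) auto
  also have "\<dots> = mat_adjoint (word_eval k f w) * mat_adjoint ?L"
    unfolding Cons(1)[OF Cons(2) s(2)] word_eval_Cons word_eval_Nil L'
    using l unfolding sq_def by (simp add: right_mult_one_mat[of _ k k])
  also have "\<dots> = mat_adjoint (?L * word_eval k f w)"
    using l we unfolding sq_def by (simp add: adj_mult[of _ k k _ k])
  finally show ?case unfolding x by simp
qed

lemma rel_triv_words: assumes "R \<subseteq> words S" shows "w \<in> rel_triv S R \<Longrightarrow> w \<in> words S"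
  apply (induct rule: rel_triv.induct) using assms by auto

lemma one_minus_one: "1\<^sub>m k - 1\<^sub>m k = (0\<^sub>m k k :: complex mat)"
  by (rule eq_matI) simp_all

lemma def_nonneg: "finite R \<Longrightarrow> 0 \<le> deficiency nrm k R f"
  unfolding deficiency_def by (rule Max_ge) auto

lemma def_ge: "finite R \<Longrightarrow> r \<in> R \<Longrightarrow> nrm (word_eval k f r - 1\<^sub>m k) \<le> deficiency nrm k R f"
  unfolding deficiency_def by (rule Max_ge) auto

lemma pair_cancel: assumes f: "unit_on k S f" and s: "s \<in> S" and uv: "u \<in> words S" "v \<in> words S"
  shows "word_eval k f (u @ [(s,b),(s,\<not> b)] @ v) = word_eval k f (u @ v)"
proof -
  let ?L = "if b then f s else mat_adjoint (f s)"
  have Lu: "unitary_mat k ?L" by (rule letter_unitary[OF f s])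
  have l: "sq k ?L" by (rule unitary_sq[OF Lu])
  have L': "(if \<not> b then f s else mat_adjoint (f s)) = mat_adjoint ?L" by simp
  have p: "word_eval k f [(s,b),(s,\<not> b)] = 1\<^sub>m k"
    unfolding word_eval_Cons word_eval_Nil L' using l unitary_r[OF Lu] adj_carrier[of ?L k k]
    unfolding sq_def by (simp add: right_mult_one_mat[of _ k k])
  have w: "[(s,b),(s,\<not> b)] \<in> words S" using s by simp
  have "word_eval k f (u @ [(s,b),(s,\<not> b)] @ v) = word_eval k f u * word_eval k f ([(s,b),(s,\<not> b)] @ v)"
    by (rule word_eval_append[OF f uv(1)], use w uv(2) in simp)
  also have "\<dots> = word_eval k f u * (word_eval k f [(s,b),(s,\<not> b)] * word_eval k f v)"
    by (subst word_eval_append[OF f w uv(2)], rule refl)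
  also have "\<dots> = word_eval k f (u @ v)"
    unfolding p using uv word_eval_sq[OF f uv(2)] by (simp add: word_eval_append[OF f] kk_simps)
  finally show ?thesis .
qed

lemma rel_triv_bound:
  assumes N: "unitarily_invariant_submult_norms nrm" and RS: "R \<subseteq> words S" and fin: "finite R"
  and w: "w \<in> rel_triv S R"
  shows "\<exists>C\<ge>0. \<forall>k f. unit_on k S f \<longrightarrow> nrm (word_eval k f w - 1\<^sub>m k) \<le> C * deficiency nrm k R f"
  using w
proof (induct rule: rel_triv.induct)
  case nil
  show ?case by (rule exI[of _ 0]) (simp add: n_zero[OF N] one_minus_one)
next
  case (rel r)
  show ?case by (rule exI[of _ 1]) (simp add: def_ge[OF fin rel])
next
  case (rel_inv r)
  have r: "r \<in> words S" using RS rel_inv by auto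
  show ?case
  proof (rule exI[of _ 1], intro conjI allI impI)
    fix k f assume f: "unit_on k S f"
    let ?W = "word_eval k f r"
    have u: "unitary_mat k ?W" by (rule word_eval_unitary[OF f r])
    have s: "sq k ?W" by (rule unitary_sq[OF u])
    have s2: "sq k (1\<^sub>m k - ?W)" by (rule sq_closed(2)[OF sq_closed(7) s])
    have e: "word_eval k f (word_inv r) - 1\<^sub>m k = mat_adjoint ?W * (1\<^sub>m k - ?W)"
      unfolding word_eval_inv[OF f r]
      by (simp add: s sq_closed unitary_l[OF u] kk_simps[where k=k])
    have "nrm (word_eval k f (word_inv r) - 1\<^sub>m k) = nrm (1\<^sub>m k - ?W)"
      unfolding e by (rule n_unit_l[OF N s2 unitary_adj[OF u]])
    also have "\<dots> = nrm (?W - 1\<^sub>m k)" using n_minus_comm[OF N sq_closed(7) s] by simp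
    also have "\<dots> \<le> 1 * deficiency nrm k R f" using def_ge[OF fin rel_inv] by simp
    finally show "nrm (word_eval k f (word_inv r) - 1\<^sub>m k) \<le> 1 * deficiency nrm k R f" .
  qed simp
next
  case (app u v)
  from app(2) obtain Cu where Cu: "Cu \<ge> 0" "\<forall>k f. unit_on k S f \<longrightarrow> nrm (word_eval k f u - 1\<^sub>m k) \<le> Cu * deficiency nrm k R f" by blast
  from app(4) obtain Cv where Cv: "Cv \<ge> 0" "\<forall>k f. unit_on k S f \<longrightarrow> nrm (word_eval k f v - 1\<^sub>m k) \<le> Cv * deficiency nrm k R f" by blast
  have uw: "u \<in> words S" "v \<in> words S" using rel_triv_words[OF RS] app by auto
  show ?case
  proof (rule exI[of _ "Cu + Cv"], intro conjI allI impI)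
    fix k f assume f: "unit_on k S f"
    let ?U = "word_eval k f u" and ?V = "word_eval k f v"
    have u: "unitary_mat k ?U" "unitary_mat k ?V" by (rule word_eval_unitary[OF f uw(1)], rule word_eval_unitary[OF f uw(2)])
    have s: "sq k ?U" "sq k ?V" using u by (simp_all add: unitary_sq)
    have s2: "sq k (?V - 1\<^sub>m k)" "sq k (?U - 1\<^sub>m k)"
      by (rule sq_closed(2)[OF s(2) sq_closed(7)], rule sq_closed(2)[OF s(1) sq_closed(7)])
    have e: "word_eval k f (u @ v) - 1\<^sub>m k = ?U * (?V - 1\<^sub>m k) + (?U - 1\<^sub>m k)"
      unfolding word_eval_append[OF f uw]
      apply (simp add: s sq_closed kk_simps[where k=k])
      apply (rule eq_matI) using s[THEN sq_dims(1)] s[THEN sq_dims(2)] by (simp_all del: index_mult_mat(1))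
    have "nrm (word_eval k f (u @ v) - 1\<^sub>m k) \<le> nrm (?U * (?V - 1\<^sub>m k)) + nrm (?U - 1\<^sub>m k)"
      unfolding e by (rule n_add[OF N sq_closed(3)[OF s(1) s2(1)] s2(2)])
    also have "\<dots> = nrm (?V - 1\<^sub>m k) + nrm (?U - 1\<^sub>m k)"
      using n_unit_l[OF N s2(1) u(1)] by simp
    also have "\<dots> \<le> Cv * deficiency nrm k R f + Cu * deficiency nrm k R f"
      using Cu(2) Cv(2) f by (meson add_mono)
    finally show "nrm (word_eval k f (u @ v) - 1\<^sub>m k) \<le> (Cu + Cv) * deficiency nrm k R f"
      by (simp add: algebra_simps)
  qed (use Cu Cv in simp)
next
  case (conj w x)
  from conj(2) obtain Cw where Cw: "Cw \<ge> 0" "\<forall>k f. unit_on k S f \<longrightarrow> nrm (word_eval k f w - 1\<^sub>m k) \<le> Cw * deficiency nrm k R f" by blast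
  have ww: "w \<in> words S" using rel_triv_words[OF RS] conj by auto
  show ?case
  proof (rule exI[of _ Cw], intro conjI allI impI)
    fix k f assume f: "unit_on k S f"
    let ?X = "word_eval k f x" and ?W = "word_eval k f w"
    have u: "unitary_mat k ?X" "unitary_mat k ?W" by (rule word_eval_unitary[OF f conj(3)], rule word_eval_unitary[OF f ww])
    have s: "sq k ?X" "sq k ?W" using u by (simp_all add: unitary_sq)
    have s2: "sq k (?W - 1\<^sub>m k)" by (rule sq_closed(2)[OF s(2) sq_closed(7)])
    have a1: "word_eval k f (x @ w @ word_inv x) = ?X * (?W * mat_adjoint ?X)"
      using conj(3) ww
      by (simp only: word_eval_append[OF f] words_append words_inv word_eval_inv[OF f conj(3)] simp_thms)
    have e: "word_eval k f (x @ w @ word_inv x) - 1\<^sub>m k = ?X * (?W - 1\<^sub>m k) * mat_adjoint ?X"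
      unfolding a1
      by (simp add: s sq_closed kk_simps[where k=k] unitary_r[OF u(1)] unitary_r2[OF u(1)])
    have "nrm (word_eval k f (x @ w @ word_inv x) - 1\<^sub>m k) = nrm (?W - 1\<^sub>m k)"
      unfolding e by (rule n_unit[OF N s2 u(1) unitary_adj[OF u(1)]])
    also have "\<dots> \<le> Cw * deficiency nrm k R f" using Cw(2) f by blast
    finally show "nrm (word_eval k f (x @ w @ word_inv x) - 1\<^sub>m k) \<le> Cw * deficiency nrm k R f" .
  qed (use Cw in simp)
next
  case (ins u v s b)
  from ins(2) obtain C where C: "C \<ge> 0" "\<forall>k f. unit_on k S f \<longrightarrow> nrm (word_eval k f (u @ v) - 1\<^sub>m k) \<le> C * deficiency nrm k R f" by blast
  have uw: "u \<in> words S" "v \<in> words S" using rel_triv_words[OF RS ins(1)] by auto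
  show ?case
    apply (rule exI[of _ C])
    using C pair_cancel[OF _ ins(3) uw, of _ _ b] by simp
next
  case (del u s b v)
  from del(2) obtain C where C: "C \<ge> 0" "\<forall>k f. unit_on k S f \<longrightarrow> nrm (word_eval k f (u @ [(s,b),(s,\<not> b)] @ v) - 1\<^sub>m k) \<le> C * deficiency nrm k R f" by blast
  have uw: "u \<in> words S" "v \<in> words S" "s \<in> S" using rel_triv_words[OF RS del(1)] by auto
  show ?case
    apply (rule exI[of _ C])
    using C pair_cancel[OF _ uw(3) uw(1,2), of _ _ b] by simp
qed

lemma pres_pi_inv:
  assumes P: "is_presentation G S R \<pi>" and w: "w \<in> words S"
  shows "\<pi> (word_inv w) = inv\<^bsub>G\<^esub> (\<pi> w)"
  using w
proof (induct w)
  case Nil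
  have "group G" using P unfolding is_presentation_def by blast
  then show ?case using P unfolding is_presentation_def by (simp add: group.is_monoid monoid.inv_one)
next
  case (Cons x w)
  obtain s b where x: "x = (s,b)" by (cases x)
  have s: "s \<in> S" "w \<in> words S" using Cons x by auto
  have G: "group G" and img: "\<pi> ` words S = carrier G"
    and hom: "\<forall>u \<in> words S. \<forall>v \<in> words S. \<pi> (u @ v) = \<pi> u \<otimes>\<^bsub>G\<^esub> \<pi> v"
    and letter: "\<forall>s \<in> S. \<pi> [(s, False)] = inv\<^bsub>G\<^esub> (\<pi> [(s, True)])"
    using P unfolding is_presentation_def by blast+
  have inG: "\<And>u. u \<in> words S \<Longrightarrow> \<pi> u \<in> carrier G" using img by blast
  have l1: "[(s, b)] \<in> words S" "[(s, \<not> b)] \<in> words S" using s by auto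
  have linv: "\<pi> [(s, \<not> b)] = inv\<^bsub>G\<^esub> (\<pi> [(s, b)])"
  proof (cases b)
    case True then show ?thesis using letter s by simp
  next
    case False
    have "\<pi> [(s, True)] \<in> carrier G" using inG s by simp
    then show ?thesis using letter s False G by (simp add: group.inv_inv)
  qed
  have "\<pi> (word_inv (x # w)) = \<pi> (word_inv w) \<otimes>\<^bsub>G\<^esub> \<pi> [(s, \<not> b)]"
    unfolding x word_inv_Cons using hom l1 words_inv[OF s(2)] by blast
  also have "\<dots> = inv\<^bsub>G\<^esub> (\<pi> w) \<otimes>\<^bsub>G\<^esub> inv\<^bsub>G\<^esub> (\<pi> [(s, b)])"
    using Cons(1)[OF s(2)] linv by simp
  also have "\<dots> = inv\<^bsub>G\<^esub> (\<pi> [(s, b)] \<otimes>\<^bsub>G\<^esub> \<pi> w)"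
    using G inG[OF l1(1)] inG[OF s(2)] by (simp add: group.inv_mult_group)
  also have "\<pi> [(s, b)] \<otimes>\<^bsub>G\<^esub> \<pi> w = \<pi> (x # w)"
    using hom l1(1) s(2) x by (metis append_Cons append_Nil)
  finally show ?case .
qed

lemma pres_rel:
  assumes P: "is_presentation G S R \<pi>"
    and sec: "\<forall>g \<in> carrier G. \<sigma> g \<in> words S \<and> \<pi> (\<sigma> g) = g"
    and g: "g \<in> carrier G" and h: "h \<in> carrier G"
  shows "\<sigma> (g \<otimes>\<^bsub>G\<^esub> h) @ word_inv (\<sigma> g @ \<sigma> h) \<in> rel_triv S R"
proof -
  have G: "group G"
    and hom: "\<forall>u \<in> words S. \<forall>v \<in> words S. \<pi> (u @ v) = \<pi> u \<otimes>\<^bsub>G\<^esub> \<pi> v"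
    and kern: "\<forall>w \<in> words S. \<pi> w = \<one>\<^bsub>G\<^esub> \<longleftrightarrow> w \<in> rel_triv S R"
    using P unfolding is_presentation_def by blast+
  have gh: "g \<otimes>\<^bsub>G\<^esub> h \<in> carrier G" using G g h by (simp add: group.is_monoid monoid.m_closed)
  have w1: "\<sigma> g \<in> words S" "\<sigma> h \<in> words S" "\<sigma> (g \<otimes>\<^bsub>G\<^esub> h) \<in> words S" using sec g h gh by auto
  have p: "\<pi> (\<sigma> g @ \<sigma> h) = g \<otimes>\<^bsub>G\<^esub> h" using hom w1 sec g h by simp
  have w2: "word_inv (\<sigma> g @ \<sigma> h) \<in> words S" using w1 by simp
  have "\<pi> (\<sigma> (g \<otimes>\<^bsub>G\<^esub> h) @ word_inv (\<sigma> g @ \<sigma> h)) = (g \<otimes>\<^bsub>G\<^esub> h) \<otimes>\<^bsub>G\<^esub> inv\<^bsub>G\<^esub> (g \<otimes>\<^bsub>G\<^esub> h)"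
    using hom w1(3) w2 pres_pi_inv[OF P, of "\<sigma> g @ \<sigma> h"] w1 p sec gh by simp
  also have "\<dots> = \<one>\<^bsub>G\<^esub>" using G gh by (simp add: group.r_inv)
  finally show ?thesis using kern w1(3) w2 by simp
qed

definition Emat :: "nat \<Rightarrow> nat \<Rightarrow> nat \<Rightarrow> complex mat" where
  "Emat k i j = mat k k (\<lambda>(a,b). if a = i \<and> b = j then 1 else 0)"

definition Pmat :: "nat \<Rightarrow> complex mat \<Rightarrow> nat \<Rightarrow> complex mat" where
  "Pmat k M p = mat k k (\<lambda>(a,b). if a * k + b < p then M $$ (a,b) else 0)"

lemma divmod_eq: "b < (k::nat) \<Longrightarrow> (a * k + b = p) \<longleftrightarrow> (a = p div k \<and> b = p mod k)"
proof -
  assume b: "b < k"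
  then have k: "k > 0" by simp
  have 1: "(a * k + b) div k = a" using b k by simp
  have 2: "(a * k + b) mod k = b" using b k by simp
  show ?thesis
  proof
    assume h: "a * k + b = p" then show "a = p div k \<and> b = p mod k" using 1 2 by (simp add: h[symmetric])
  next
    assume "a = p div k \<and> b = p mod k" then show "a * k + b = p" by simp
  qed
qed

lemma lt_sq: "a < (k::nat) \<Longrightarrow> b < k \<Longrightarrow> a * k + b < k * k"
proof -
  assume a: "a < k" "b < k"
  have "a * k + b < a * k + k" using a by simp
  also have "\<dots> = (a + 1) * k" by simp
  also have "\<dots> \<le> k * k" using a by (intro mult_right_mono) auto
  finally show ?thesis .
qed

lemma Pmat_Suc: "Pmat k M (Suc p) = Pmat k M p +
   (if p < k * k then M $$ (p div k, p mod k) \<cdot>\<^sub>m Emat k (p div k) (p mod k) else 0\<^sub>m k k)"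
proof (rule eq_matI)
  fix a b assume ab: "a < dim_row (Pmat k M p +
   (if p < k * k then M $$ (p div k, p mod k) \<cdot>\<^sub>m Emat k (p div k) (p mod k) else 0\<^sub>m k k))"
     "b < dim_col (Pmat k M p +
   (if p < k * k then M $$ (p div k, p mod k) \<cdot>\<^sub>m Emat k (p div k) (p mod k) else 0\<^sub>m k k))"
  then have a: "a < k" "b < k" by (simp_all add: Pmat_def Emat_def split: if_split_asm)
  have d: "(a * k + b = p) \<longleftrightarrow> (a = p div k \<and> b = p mod k)" using divmod_eq[OF a(2)] .
  have l: "a * k + b < k * k" using lt_sq[OF a] .
  have l2: "a = p div k \<and> b = p mod k \<Longrightarrow> p < k * k" using d l by auto
  show "Pmat k M (Suc p) $$ (a, b) = (Pmat k M p +
   (if p < k * k then M $$ (p div k, p mod k) \<cdot>\<^sub>m Emat k (p div k) (p mod k) else 0\<^sub>m k k)) $$ (a, b)"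
    using a d l l2 by (auto simp add: Pmat_def Emat_def less_Suc_eq)
qed (simp_all add: Pmat_def Emat_def)

lemma Pmat_0: "Pmat k M 0 = 0\<^sub>m k k"
  by (rule eq_matI) (simp_all add: Pmat_def)

lemma Pmat_full: "sq k M \<Longrightarrow> Pmat k M (k * k) = M"
  unfolding sq_def by (rule eq_matI) (simp_all add: Pmat_def lt_sq)

lemma sq_Emat: "sq k (Emat k i j)" unfolding sq_def Emat_def by simp
lemma sq_Pmat: "sq k (Pmat k M p)" unfolding sq_def Pmat_def by simp

context
  fixes nrm :: "complex mat \<Rightarrow> real" and k :: nat
  assumes N: "unitarily_invariant_submult_norms nrm"
begin

lemma Pmat_bound: "nrm (Pmat k M p) \<le> (\<Sum>q<p. if q < k * k then cmod (M $$ (q div k, q mod k)) * nrm (Emat k (q div k) (q mod k)) else 0)"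
proof (induct p)
  case 0 then show ?case by (simp add: Pmat_0 n_zero[OF N])
next
  case (Suc p)
  show ?case
  proof (cases "p < k * k")
    case True
    have "nrm (Pmat k M (Suc p)) \<le> nrm (Pmat k M p) + nrm (M $$ (p div k, p mod k) \<cdot>\<^sub>m Emat k (p div k) (p mod k))"
      unfolding Pmat_Suc using True by (simp add: n_add[OF N sq_Pmat sq_closed(5)[OF sq_Emat]])
    also have "\<dots> = nrm (Pmat k M p) + cmod (M $$ (p div k, p mod k)) * nrm (Emat k (p div k) (p mod k))"
      by (simp add: n_smult[OF N sq_Emat])
    finally show ?thesis using Suc True by simp
  next
    case False
    have "Pmat k M (Suc p) = Pmat k M p + 0\<^sub>m k k" unfolding Pmat_Suc using False by simp
    also have "\<dots> = Pmat k M p" by (rule eq_matI) (simp_all add: Pmat_def)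
    finally show ?thesis using Suc False by simp
  qed
qed

lemma nrm_entries: "sq k M \<Longrightarrow> nrm M \<le> (\<Sum>q<k*k. cmod (M $$ (q div k, q mod k)) * nrm (Emat k (q div k) (q mod k)))"
  using Pmat_bound[of M "k * k"] Pmat_full[of k M] by simp

lemma nrm_tendsto0:
  fixes Ms :: "'b \<Rightarrow> complex mat"
  assumes s: "\<And>n. sq k (Ms n)" and e: "\<And>i j. i < k \<Longrightarrow> j < k \<Longrightarrow> ((\<lambda>n. Ms n $$ (i,j)) \<longlongrightarrow> 0) F"
  shows "((\<lambda>n. nrm (Ms n)) \<longlongrightarrow> 0) F"
proof (rule tendsto_sandwich[of "\<lambda>n. 0"])
  show "\<forall>\<^sub>F n in F. 0 \<le> nrm (Ms n)" using n_nonneg[OF N s] by simp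
  show "((\<lambda>n. 0::real) \<longlongrightarrow> 0) F" by simp
  show "\<forall>\<^sub>F n in F. nrm (Ms n) \<le> (\<Sum>q<k*k. cmod (Ms n $$ (q div k, q mod k)) * nrm (Emat k (q div k) (q mod k)))"
  proof (rule always_eventually, rule allI)
    fix n
    show "nrm (Ms n) \<le> (\<Sum>q<k*k. cmod (Ms n $$ (q div k, q mod k)) * nrm (Emat k (q div k) (q mod k)))"
      using nrm_entries[OF s[of n]] n_nonneg[OF N s[of n]] by simp
  qed
  show "((\<lambda>n. \<Sum>q<k*k. cmod (Ms n $$ (q div k, q mod k)) * nrm (Emat k (q div k) (q mod k))) \<longlongrightarrow> 0) F"
  proof (rule tendsto_null_sum)
    fix q assume q: "q \<in> {..<k*k}"
    then have k: "k > 0" by (cases k) auto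
    have "q div k < k" using q by (simp add: less_mult_imp_div_less)
    moreover have "q mod k < k" using k by simp
    ultimately have "((\<lambda>n. cmod (Ms n $$ (q div k, q mod k))) \<longlongrightarrow> 0) F"
      using e tendsto_norm_zero by blast
    then show "((\<lambda>n. cmod (Ms n $$ (q div k, q mod k)) * nrm (Emat k (q div k) (q mod k))) \<longlongrightarrow> 0) F"
      by (rule tendsto_mult_left_zero)
  qed
qed

end

lemma mult_entry: "sq k X \<Longrightarrow> sq k Y \<Longrightarrow> i < k \<Longrightarrow> j < k \<Longrightarrow>
  (X * Y) $$ (i,j) = (\<Sum>l<k. X $$ (i,l) * Y $$ (l,j))"
  unfolding sq_def by (simp add: scalar_prod_def atLeast0LessThan)

lemma sq_pow: "sq k A \<Longrightarrow> sq k (A ^\<^sub>m m)"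
  unfolding sq_def by simp

lemma pow_one: "sq k A \<Longrightarrow> A ^\<^sub>m 1 = A"
  unfolding sq_def by simp

lemma pow_zero: "sq k A \<Longrightarrow> A ^\<^sub>m 0 = 1\<^sub>m k"
  unfolding sq_def by simp

lemma pow_entry_bound:
  assumes A: "sq k A" and i: "i < k" and j: "j < k"
  shows "cmod ((A ^\<^sub>m m) $$ (i,j)) \<le> (\<Sum>a<k. \<Sum>b<k. cmod (A $$ (a,b))) ^ m"
  using i j
proof (induct m arbitrary: i j)
  case 0 then show ?case using A by (simp add: sq_dims[OF A])
next
  case (Suc m)
  let ?c = "\<Sum>a<k. \<Sum>b<k. cmod (A $$ (a,b))"
  have "cmod ((A ^\<^sub>m Suc m) $$ (i,j)) = cmod (\<Sum>l<k. (A ^\<^sub>m m) $$ (i,l) * A $$ (l,j))"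
    using mult_entry[OF sq_pow[OF A] A Suc(2,3)] by simp
  also have "\<dots> \<le> (\<Sum>l<k. cmod ((A ^\<^sub>m m) $$ (i,l)) * cmod (A $$ (l,j)))"
    by (rule order_trans[OF norm_sum]) (simp add: norm_mult)
  also have "\<dots> \<le> (\<Sum>l<k. ?c ^ m * cmod (A $$ (l,j)))"
    by (rule sum_mono, rule mult_right_mono) (use Suc in auto)
  also have "\<dots> = ?c ^ m * (\<Sum>l<k. cmod (A $$ (l,j)))" by (simp add: sum_distrib_left)
  also have "(\<Sum>l<k. cmod (A $$ (l,j))) \<le> ?c"
  proof -
    have "(\<Sum>l<k. cmod (A $$ (l,j))) \<le> (\<Sum>l<k. \<Sum>b<k. cmod (A $$ (l,b)))"
      by (rule sum_mono, rule member_le_sum) (use Suc in auto)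
    then show ?thesis by simp
  qed
  then have "?c ^ m * (\<Sum>l<k. cmod (A $$ (l,j))) \<le> ?c ^ m * ?c"
    by (intro mult_left_mono zero_le_power sum_nonneg) auto
  finally show ?case by (simp add: mult.commute)
qed

definition ef :: "complex mat \<Rightarrow> nat \<Rightarrow> nat \<Rightarrow> nat \<Rightarrow> complex" where
  "ef A i j m = (A ^\<^sub>m m) $$ (i,j) / of_nat (fact m)"

lemma ef_summable: assumes A: "sq k A" and i: "i < k" and j: "j < k" shows "summable (ef A i j)"
proof (rule summable_comparison_test)
  let ?c = "\<Sum>a<k. \<Sum>b<k. cmod (A $$ (a,b))"
  show "summable (\<lambda>n. inverse (fact n) * ?c ^ n)" by (rule summable_exp)
  show "\<exists>N. \<forall>n\<ge>N. norm (ef A i j n) \<le> inverse (fact n) * ?c ^ n"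
  proof (intro exI allI impI)
    fix n :: nat
    have "norm (ef A i j n) = cmod ((A ^\<^sub>m n) $$ (i,j)) / fact n"
      unfolding ef_def by (simp add: norm_divide)
    also have "\<dots> \<le> ?c ^ n / fact n"
      by (rule divide_right_mono[OF pow_entry_bound[OF A i j]]) simp
    finally show "norm (ef A i j n) \<le> inverse (fact n) * ?c ^ n" by (simp add: field_simps)
  qed
qed

lemma mat_exp_eq: "sq k A \<Longrightarrow> mat_exp A = mat k k (\<lambda>(i,j). suminf (ef A i j))"
  unfolding sq_def mat_exp_def ef_def by simp

lemma sq_mat_exp: "sq k A \<Longrightarrow> sq k (mat_exp A)"
  unfolding sq_def mat_exp_def by simp

definition Tm :: "nat \<Rightarrow> complex mat \<Rightarrow> nat \<Rightarrow> complex mat" where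
  "Tm k A N = mat k k (\<lambda>(i,j). \<Sum>m\<in>{2..<N}. ef A i j m)"

lemma sq_Tm: "sq k (Tm k A N)" unfolding sq_def Tm_def by simp

lemma Tm_Suc: "sq k A \<Longrightarrow> Tm k A (Suc N) = Tm k A N +
   (if 2 \<le> N then (1 / of_nat (fact N)) \<cdot>\<^sub>m (A ^\<^sub>m N) else 0\<^sub>m k k)"
  unfolding sq_def by (cases "2 \<le> N"; rule eq_matI) (simp_all add: Tm_def ef_def)

context
  fixes nrm :: "complex mat \<Rightarrow> real" and k :: nat
  assumes N: "unitarily_invariant_submult_norms nrm"
begin

lemma pow_norm: "sq k A \<Longrightarrow> m \<ge> 1 \<Longrightarrow> nrm (A ^\<^sub>m m) \<le> nrm A ^ m"
proof (induct m)
  case 0 then show ?case by simp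
next
  case (Suc m)
  show ?case
  proof (cases "m = 0")
    case True then show ?thesis using pow_one[OF Suc(2)] by simp
  next
    case False
    have "nrm (A ^\<^sub>m Suc m) \<le> nrm (A ^\<^sub>m m) * nrm A"
      unfolding pow_mat.simps by (rule n_mult[OF N sq_pow[OF Suc(2)] Suc(2)])
    also have "\<dots> \<le> nrm A ^ m * nrm A"
      by (rule mult_right_mono) (use Suc False n_nonneg[OF N Suc(2)] in auto)
    finally show ?thesis by (simp add: mult.commute)
  qed
qed

lemma Tm_bound: "sq k A \<Longrightarrow> nrm (Tm k A N) \<le> (\<Sum>m\<in>{2..<N}. nrm A ^ m / fact m)"
proof (induct N)
  case 0
  have "Tm k A 0 = 0\<^sub>m k k" by (rule eq_matI) (simp_all add: Tm_def)
  then show ?case by (simp add: n_zero[OF N])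
next
  case (Suc N)
  show ?case
  proof (cases "2 \<le> N")
    case True
    have "nrm (Tm k A (Suc N)) \<le> nrm (Tm k A N) + nrm ((1 / of_nat (fact N)) \<cdot>\<^sub>m (A ^\<^sub>m N))"
      unfolding Tm_Suc[OF Suc(2)] using True
      by (simp add: n_add[OF N sq_Tm sq_closed(5)[OF sq_pow[OF Suc(2)]]])
    also have "nrm ((1 / of_nat (fact N)) \<cdot>\<^sub>m (A ^\<^sub>m N)) = nrm (A ^\<^sub>m N) / fact N"
      by (simp add: n_smult[OF N sq_pow[OF Suc(2)]] norm_divide)
    also have "\<dots> \<le> nrm A ^ N / fact N"
      by (rule divide_right_mono[OF pow_norm[OF Suc(2)]]) (use True in auto)
    finally show ?thesis using Suc True by simp
  next
    case False
    have "Tm k A (Suc N) = Tm k A N" 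
      unfolding Tm_Suc[OF Suc(2)] using False by (rule_tac eq_matI) (simp_all add: Tm_def)
    then show ?thesis using Suc False by simp
  qed
qed

end

lemma exp_partial: assumes a: "0 \<le> (a::real)" shows "(\<Sum>m\<in>{2..<N}. a ^ m / fact m) \<le> exp a - 1 - a"
proof -
  have s: "summable (\<lambda>m. a ^ m / fact m)"
    using summable_exp[of a] by (simp add: field_simps)
  have e: "exp a = (\<Sum>m. a ^ m / fact m)"
    using exp_converges[of a] by (simp add: sums_iff field_simps)
  have "(\<Sum>m\<in>{2..<N}. a ^ m / fact m) \<le> (\<Sum>m\<in>{2..<N+2}. a ^ m / fact m)"
    by (rule sum_mono2) (use a in auto)
  also have "\<dots> = (\<Sum>m<N+2. a ^ m / fact m) - 1 - a"
  proof -
    have "{..<N+2} = {0, 1} \<union> {2..<N+2}" by auto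
    then have "(\<Sum>m<N+2. a ^ m / fact m) = (\<Sum>m\<in>{0,1}. a ^ m / fact m) + (\<Sum>m\<in>{2..<N+2}. a ^ m / fact m)"
      by (simp add: sum.union_disjoint)
    then show ?thesis by simp
  qed
  also have "(\<Sum>m<N+2. a ^ m / fact m) \<le> exp a"
    unfolding e by (rule sum_le_suminf[OF s]) (use a in auto)
  finally show ?thesis by simp
qed

lemma sum_split2: "(\<Sum>m<N+2. (g::nat \<Rightarrow> 'a::comm_monoid_add) m) = g 0 + g 1 + (\<Sum>m\<in>{2..<N+2}. g m)"
proof -
  have "{..<N+2} = {0, 1} \<union> {2..<N+2}" by auto
  then show ?thesis by (simp add: sum.union_disjoint ac_simps)
qed

context
  fixes nrm :: "complex mat \<Rightarrow> real" and k :: nat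
  assumes N: "unitarily_invariant_submult_norms nrm"
begin

lemma mexp_rem: assumes A: "sq k A"
  shows "nrm (mat_exp A - 1\<^sub>m k - A) \<le> exp (nrm A) - 1 - nrm A"
proof -
  define Ms where "Ms n = mat_exp A - 1\<^sub>m k - A - Tm k A (n + 2)" for n
  have sqE: "sq k (mat_exp A - 1\<^sub>m k - A)"
    by (intro sq_closed(2) sq_mat_exp A sq_closed(7))
  have sqM: "sq k (Ms n)" for n unfolding Ms_def by (intro sq_closed(2) sqE sq_Tm)
  have entry: "Ms n $$ (i,j) = suminf (ef A i j) - (\<Sum>m<n+2. ef A i j m)" if ij: "i < k" "j < k" for n i j
  proof -
    have e0: "ef A i j 0 = (if i = j then 1 else 0)" unfolding ef_def using A ij by (simp add: sq_dims)
    have e1: "ef A i j 1 = A $$ (i,j)" unfolding ef_def using A ij by (simp add: pow_one)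
    show ?thesis unfolding Ms_def sum_split2 e0 e1 using A ij
      by (simp add: sq_dims mat_exp_eq[OF A] Tm_def sq_closed sq_mat_exp)
  qed
  have lim: "((\<lambda>n. nrm (Ms n)) \<longlongrightarrow> 0) sequentially"
  proof (rule nrm_tendsto0[OF N sqM])
    fix i j assume ij: "i < k" "j < k"
    have "(\<lambda>n. \<Sum>m<n. ef A i j m) \<longlonglongrightarrow> suminf (ef A i j)"
      by (rule summable_LIMSEQ, rule ef_summable[OF A ij])
    then have "(\<lambda>n. \<Sum>m<n+2. ef A i j m) \<longlonglongrightarrow> suminf (ef A i j)"
      by (rule LIMSEQ_ignore_initial_segment)
    then have "(\<lambda>n. suminf (ef A i j) - (\<Sum>m<n+2. ef A i j m)) \<longlonglongrightarrow> suminf (ef A i j) - suminf (ef A i j)"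
      by (intro tendsto_diff tendsto_const)
    then show "((\<lambda>n. Ms n $$ (i,j)) \<longlongrightarrow> 0) sequentially"
      using entry[OF ij] by simp
  qed
  have bound: "nrm (mat_exp A - 1\<^sub>m k - A) \<le> nrm (Ms n) + (exp (nrm A) - 1 - nrm A)" for n
  proof -
    have eq: "mat_exp A - 1\<^sub>m k - A = Ms n + Tm k A (n + 2)"
      unfolding Ms_def using sqE sq_Tm[of k A "n+2"] A unfolding sq_def
      by (rule_tac eq_matI) simp_all
    have "nrm (mat_exp A - 1\<^sub>m k - A) \<le> nrm (Ms n) + nrm (Tm k A (n + 2))"
      unfolding eq by (rule n_add[OF N sqM sq_Tm])
    also have "nrm (Tm k A (n + 2)) \<le> exp (nrm A) - 1 - nrm A"
      using Tm_bound[OF N A, of "n+2"] exp_partial[OF n_nonneg[OF N A], of "n+2"] by linarith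
    finally show ?thesis by simp
  qed
  have "((\<lambda>n. nrm (Ms n) + (exp (nrm A) - 1 - nrm A)) \<longlongrightarrow> 0 + (exp (nrm A) - 1 - nrm A)) sequentially"
    by (intro tendsto_add lim tendsto_const)
  then have "(\<lambda>n. nrm (Ms n) + (exp (nrm A) - 1 - nrm A)) \<longlonglongrightarrow> exp (nrm A) - 1 - nrm A" by simp
  then show ?thesis
    by (rule LIMSEQ_le_const) (use bound in auto)
qed

end

lemma ident1:
  fixes Pg Ph Pgh Bg Bh Bgh Rg Rh Rgh Eg Eh Egh :: "complex mat" and dd :: complex
  assumes u: "unitary_mat k Pg" "unitary_mat k Ph" "unitary_mat k Pgh"
  and c: "sq k Bg" "sq k Bh" "sq k Bgh" "sq k Rg" "sq k Rh" "sq k Rgh"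
  and E: "Eg = 1\<^sub>m k + (- dd) \<cdot>\<^sub>m Bg + Rg" "Eh = 1\<^sub>m k + (- dd) \<cdot>\<^sub>m Bh + Rh" "Egh = 1\<^sub>m k + (- dd) \<cdot>\<^sub>m Bgh + Rgh"
  shows "Egh * Pgh - Eg * Pg * (Eh * Ph) =
    - ((Pg * Ph - Pgh) + dd \<cdot>\<^sub>m (Bgh * Pgh - Bg * Pg * Ph - Pg * Bh * Ph))
    + (Rgh * Pgh - Pg * Rh * Ph - (dd * dd) \<cdot>\<^sub>m (Bg * Pg * Bh * Ph) + dd \<cdot>\<^sub>m (Bg * Pg * Rh * Ph)
       - Rg * Pg * Ph + dd \<cdot>\<^sub>m (Rg * Pg * Bh * Ph) - Rg * Pg * Rh * Ph)"
proof -
  note cc = unitary_sq[OF u(1)] unitary_sq[OF u(2)] unitary_sq[OF u(3)] c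
  note dd = cc[THEN sq_dims(1)] cc[THEN sq_dims(2)]
  show ?thesis unfolding E
    apply (simp add: cc kk_simps[where k=k] sq_closed)
    apply (rule eq_matI)
      apply (simp_all add: dd algebra_simps del: index_mult_mat(1))
    done
qed

lemma ident2:
  fixes Pg Ph Pgh Wg Wgh Bg Bh Bgh :: "complex mat" and d :: complex
  assumes u: "unitary_mat k Pg" "unitary_mat k Ph" "unitary_mat k Pgh" "unitary_mat k Wg" "unitary_mat k Wgh"
  and c: "sq k Bg" "sq k Bh" "sq k Bgh"
  and D: "D = Pg * Ph - Pgh"
  shows "(D + d \<cdot>\<^sub>m (Bgh * Pgh - Bg * Pg * Ph - Pg * Bh * Ph)) * mat_adjoint Pgh
    = (D * mat_adjoint Wgh - d \<cdot>\<^sub>m (Wg * Bh * mat_adjoint Wg - Bgh + Bg))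
      + (D * (mat_adjoint Pgh - mat_adjoint Wgh) - d \<cdot>\<^sub>m (Bg * D * mat_adjoint Pgh)
         + d \<cdot>\<^sub>m (Wg * Bh * mat_adjoint Wg - Pg * Bh * mat_adjoint Pg)
         - d \<cdot>\<^sub>m (Pg * Bh * mat_adjoint Pg * D * mat_adjoint Pgh))"
proof -
  note cc = unitary_sq[OF u(1)] unitary_sq[OF u(2)] unitary_sq[OF u(3)]
     unitary_sq[OF u(4)] unitary_sq[OF u(5)] c
  note uu = unitary_l[OF u(1)] unitary_r[OF u(1)] unitary_l[OF u(2)] unitary_r[OF u(2)]
     unitary_l[OF u(3)] unitary_r[OF u(3)] unitary_l[OF u(4)] unitary_r[OF u(4)] unitary_l[OF u(5)] unitary_r[OF u(5)]
     unitary_l2[OF u(1)] unitary_r2[OF u(1)] unitary_l2[OF u(2)] unitary_r2[OF u(2)]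
     unitary_l2[OF u(3)] unitary_r2[OF u(3)] unitary_l2[OF u(4)] unitary_r2[OF u(4)] unitary_l2[OF u(5)] unitary_r2[OF u(5)]
  note dd = cc[THEN sq_dims(1)] cc[THEN sq_dims(2)]
  show ?thesis unfolding D
    apply (simp add: cc uu kk_simps[where k=k] sq_closed)
    apply (rule eq_matI)
      apply (simp_all add: dd algebra_simps del: index_mult_mat(1))
    done
qed

lemma ident3:
  assumes u: "unitary_mat k P" "unitary_mat k W"
  shows "mat_adjoint P - mat_adjoint W = mat_adjoint P * (W - P) * mat_adjoint W"
proof -
  note cc = unitary_sq[OF u(1)] unitary_sq[OF u(2)]
  note uu = unitary_l[OF u(1)] unitary_r[OF u(1)] unitary_l[OF u(2)] unitary_r[OF u(2)]
     unitary_l2[OF u(1)] unitary_r2[OF u(1)] unitary_l2[OF u(2)] unitary_r2[OF u(2)]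
  note dd = cc[THEN sq_dims(1)] cc[THEN sq_dims(2)]
  show ?thesis
    by (simp add: cc uu kk_simps[where k=k] sq_closed)
qed

lemma ident4:
  assumes u: "unitary_mat k P" "unitary_mat k W" and b: "sq k B"
  shows "W * B * mat_adjoint W - P * B * mat_adjoint P = (W - P) * B * mat_adjoint W + P * (B * (mat_adjoint W - mat_adjoint P))"
proof -
  note cc = unitary_sq[OF u(1)] unitary_sq[OF u(2)] b
  note dd = cc[THEN sq_dims(1)] cc[THEN sq_dims(2)]
  show ?thesis
    apply (simp add: cc kk_simps[where k=k] sq_closed)
    apply (rule eq_matI)
      apply (simp_all add: dd algebra_simps del: index_mult_mat(1))
    done
qed

lemma E_expand: assumes "sq k B"
  shows "mat_exp ((- dd) \<cdot>\<^sub>m B) = 1\<^sub>m k + (- dd) \<cdot>\<^sub>m B + (mat_exp ((- dd) \<cdot>\<^sub>m B) - 1\<^sub>m k - (- dd) \<cdot>\<^sub>m B)"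
proof -
  have s: "sq k (mat_exp ((- dd) \<cdot>\<^sub>m B))" by (rule sq_mat_exp, rule sq_closed(5), rule assms)
  show ?thesis using s assms unfolding sq_def by (rule_tac eq_matI) simp_all
qed

definition rf :: "real \<Rightarrow> real" where "rf x = exp x - 1 - x"

context
  fixes nrm :: "complex mat \<Rightarrow> real" and k :: nat
  assumes N: "unitarily_invariant_submult_norms nrm"
begin

lemma n_unit4: "sq k A \<Longrightarrow> sq k B \<Longrightarrow> unitary_mat k U \<Longrightarrow> unitary_mat k V \<Longrightarrow> nrm (A * U * B * V) \<le> nrm A * nrm B"
proof -
  assume a: "sq k A" "sq k B" "unitary_mat k U" "unitary_mat k V"
  have su: "sq k U" by (rule unitary_sq[OF a(3)])
  have "nrm (A * U * B * V) = nrm (A * U * B)" by (rule n_unit_r[OF N _ a(4)]) (intro sq_closed(3) a su)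
  also have "\<dots> \<le> nrm (A * U) * nrm B" by (rule n_mult[OF N _ a(2)]) (intro sq_closed(3) a su)
  also have "nrm (A * U) = nrm A" by (rule n_unit_r[OF N a(1) a(3)])
  finally show ?thesis .
qed

lemma n_unit3: "sq k A \<Longrightarrow> unitary_mat k U \<Longrightarrow> unitary_mat k V \<Longrightarrow> nrm (A * U * V) = nrm A"
proof -
  assume a: "sq k A" "unitary_mat k U" "unitary_mat k V"
  have "nrm (A * U * V) = nrm (A * U)" by (rule n_unit_r[OF N _ a(3)]) (intro sq_closed(3) a unitary_sq[OF a(2)])
  also have "\<dots> = nrm A" by (rule n_unit_r[OF N a(1) a(2)])
  finally show ?thesis .
qed

lemma n7: assumes "sq k T1" "sq k T2" "sq k T3" "sq k T4" "sq k T5" "sq k T6" "sq k T7"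
  shows "nrm (T1 - T2 - T3 + T4 - T5 + T6 - T7) \<le> nrm T1 + nrm T2 + nrm T3 + nrm T4 + nrm T5 + nrm T6 + nrm T7"
proof -
  have s12: "sq k (T1 - T2)" by (intro sq_closed assms)
  have s123: "sq k (T1 - T2 - T3)" by (intro sq_closed assms)
  have s4: "sq k (T1 - T2 - T3 + T4)" by (intro sq_closed assms)
  have s5: "sq k (T1 - T2 - T3 + T4 - T5)" by (intro sq_closed assms)
  have s6: "sq k (T1 - T2 - T3 + T4 - T5 + T6)" by (intro sq_closed assms)
  have "nrm (T1 - T2) \<le> nrm T1 + nrm T2" by (rule n_minus[OF N assms(1,2)])
  moreover have "nrm (T1 - T2 - T3) \<le> nrm (T1 - T2) + nrm T3" by (rule n_minus[OF N s12 assms(3)])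
  moreover have "nrm (T1 - T2 - T3 + T4) \<le> nrm (T1 - T2 - T3) + nrm T4" by (rule n_add[OF N s123 assms(4)])
  moreover have "nrm (T1 - T2 - T3 + T4 - T5) \<le> nrm (T1 - T2 - T3 + T4) + nrm T5" by (rule n_minus[OF N s4 assms(5)])
  moreover have "nrm (T1 - T2 - T3 + T4 - T5 + T6) \<le> nrm (T1 - T2 - T3 + T4 - T5) + nrm T6" by (rule n_add[OF N s5 assms(6)])
  moreover have "nrm (T1 - T2 - T3 + T4 - T5 + T6 - T7) \<le> nrm (T1 - T2 - T3 + T4 - T5 + T6) + nrm T7" by (rule n_minus[OF N s6 assms(7)])
  ultimately show ?thesis by linarith
qed

lemma rem_bound: assumes B: "sq k B" and d: "0 \<le> d"
  shows "nrm (mat_exp ((- complex_of_real d) \<cdot>\<^sub>m B) - 1\<^sub>m k - (- complex_of_real d) \<cdot>\<^sub>m B) \<le> rf (d * nrm B)"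
proof -
  have s: "sq k ((- complex_of_real d) \<cdot>\<^sub>m B)" by (rule sq_closed(5)[OF B])
  have "nrm ((- complex_of_real d) \<cdot>\<^sub>m B) = d * nrm B" using d by (simp add: n_smult[OF N B])
  then show ?thesis using mexp_rem[OF N s] unfolding rf_def by simp
qed

end

context
  fixes nrm :: "complex mat \<Rightarrow> real" and k :: nat
  assumes N: "unitarily_invariant_submult_norms nrm"
begin

lemma Q_bound:
  fixes Pg Ph Pgh Wg Wgh Bg Bh Bgh c :: "complex mat" and d :: real
  assumes u: "unitary_mat k Pg" "unitary_mat k Ph" "unitary_mat k Pgh" "unitary_mat k Wg" "unitary_mat k Wgh"
  and s: "sq k Bg" "sq k Bh" "sq k Bgh" "sq k c"
  and d0: "0 \<le> d"
  and Dc: "Pg * Ph - Pgh = complex_of_real d \<cdot>\<^sub>m c"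
  shows "nrm ((Pg * Ph - Pgh) + complex_of_real d \<cdot>\<^sub>m (Bgh * Pgh - Bg * Pg * Ph - Pg * Bh * Ph))
     \<le> d * (nrm (c * mat_adjoint Wgh - (Wg * Bh * mat_adjoint Wg - Bgh + Bg)) + nrm c * nrm (Wgh - Pgh)
           + d * nrm Bg * nrm c + 2 * nrm Bh * nrm (Wg - Pg) + d * nrm Bh * nrm c)"
proof -
  let ?dd = "complex_of_real d"
  define D where "D = Pg * Ph - Pgh"
  note us = unitary_sq[OF u(1)] unitary_sq[OF u(2)] unitary_sq[OF u(3)] unitary_sq[OF u(4)] unitary_sq[OF u(5)]
  note ua = unitary_adj[OF u(1)] unitary_adj[OF u(3)] unitary_adj[OF u(4)] unitary_adj[OF u(5)]
  note uas = unitary_sq[OF ua(1)] unitary_sq[OF ua(2)] unitary_sq[OF ua(3)] unitary_sq[OF ua(4)]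
  have sD: "sq k D" unfolding D_def by (intro sq_closed us)
  have Dc': "D = ?dd \<cdot>\<^sub>m c" using Dc unfolding D_def .
  have nD: "nrm D = d * nrm c" unfolding Dc' using d0 by (simp add: n_smult[OF N s(4)])
  define Z where "Z = c * mat_adjoint Wgh - (Wg * Bh * mat_adjoint Wg - Bgh + Bg)"
  have sZ: "sq k Z" unfolding Z_def by (intro sq_closed s us)
  define Ta where "Ta = D * (mat_adjoint Pgh - mat_adjoint Wgh)"
  define Tb where "Tb = ?dd \<cdot>\<^sub>m (Bg * D * mat_adjoint Pgh)"
  define Tc where "Tc = ?dd \<cdot>\<^sub>m (Wg * Bh * mat_adjoint Wg - Pg * Bh * mat_adjoint Pg)"
  define Td where "Td = ?dd \<cdot>\<^sub>m (Pg * Bh * mat_adjoint Pg * D * mat_adjoint Pgh)"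
  have sT: "sq k Ta" "sq k Tb" "sq k Tc" "sq k Td" unfolding Ta_def Tb_def Tc_def Td_def
    by (intro sq_closed s us sD)+
  let ?Q = "(Pg * Ph - Pgh) + ?dd \<cdot>\<^sub>m (Bgh * Pgh - Bg * Pg * Ph - Pg * Bh * Ph)"
  have sQ: "sq k ?Q" by (intro sq_closed s us)
  have e2: "?Q * mat_adjoint Pgh = (D * mat_adjoint Wgh - ?dd \<cdot>\<^sub>m (Wg * Bh * mat_adjoint Wg - Bgh + Bg)) + (Ta - Tb + Tc - Td)"
    unfolding Ta_def Tb_def Tc_def Td_def D_def[symmetric]
    by (rule ident2[OF u s(1,2,3) D_def])
  have eZ: "D * mat_adjoint Wgh - ?dd \<cdot>\<^sub>m (Wg * Bh * mat_adjoint Wg - Bgh + Bg) = ?dd \<cdot>\<^sub>m Z"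
  proof -
    note cc = s us uas
    note dd = cc[THEN sq_dims(1)] cc[THEN sq_dims(2)]
    show ?thesis unfolding Dc' Z_def
      apply (simp add: cc kk_simps[where k=k] sq_closed)
      apply (rule eq_matI)
        apply (simp_all add: dd algebra_simps del: index_mult_mat(1))
      done
  qed
  have "nrm ?Q = nrm (?Q * mat_adjoint Pgh)" by (rule n_unit_r[OF N sQ ua(2), symmetric])
  also have "\<dots> \<le> nrm (?dd \<cdot>\<^sub>m Z) + nrm (Ta - Tb + Tc - Td)"
  proof -
    have a: "sq k (?dd \<cdot>\<^sub>m Z)" "sq k (Ta - Tb + Tc - Td)" by (intro sq_closed sZ sT)+
    show ?thesis unfolding e2 eZ by (rule n_add[OF N a])
  qed
  also have "nrm (?dd \<cdot>\<^sub>m Z) = d * nrm Z" using d0 by (simp add: n_smult[OF N sZ])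
  also have "nrm (Ta - Tb + Tc - Td) \<le> nrm Ta + nrm Tb + nrm Tc + nrm Td"
  proof -
    have "nrm (Ta - Tb + Tc - Td) \<le> nrm (Ta - Tb + Tc) + nrm Td" by (rule n_minus[OF N, of k]) (intro sq_closed sT)+
    moreover have "nrm (Ta - Tb + Tc) \<le> nrm (Ta - Tb) + nrm Tc" by (rule n_add[OF N, of k]) (intro sq_closed sT)+
    moreover have "nrm (Ta - Tb) \<le> nrm Ta + nrm Tb" by (rule n_minus[OF N sT(1,2)])
    ultimately show ?thesis by linarith
  qed
  also have "nrm Ta \<le> d * nrm c * nrm (Wgh - Pgh)"
  proof -
    have sW: "sq k (Wgh - Pgh)" by (intro sq_closed us)
    have "nrm Ta \<le> nrm D * nrm (mat_adjoint Pgh - mat_adjoint Wgh)"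
      unfolding Ta_def by (rule n_mult[OF N sD]) (intro sq_closed uas)
    also have "nrm (mat_adjoint Pgh - mat_adjoint Wgh) = nrm (Wgh - Pgh)"
      unfolding ident3[OF u(3) u(5)] by (rule n_unit[OF N sW ua(2) ua(4)])
    finally show ?thesis unfolding nD by simp
  qed
  also have "nrm Tb \<le> d * (nrm Bg * (d * nrm c))"
  proof -
    have "nrm Tb = d * nrm (Bg * D * mat_adjoint Pgh)"
      unfolding Tb_def using d0 by (simp add: n_smult[OF N, of k] sq_closed s sD uas)
    also have "nrm (Bg * D * mat_adjoint Pgh) = nrm (Bg * D)"
      by (rule n_unit_r[OF N _ ua(2)]) (intro sq_closed s sD)
    also have "nrm (Bg * D) \<le> nrm Bg * (d * nrm c)" unfolding nD[symmetric] by (rule n_mult[OF N s(1) sD])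
    finally show ?thesis using d0 by (simp add: mult_left_mono)
  qed
  also have "nrm Tc \<le> d * (2 * nrm Bh * nrm (Wg - Pg))"
  proof -
    have sWP: "sq k (Wg - Pg)" "sq k (Pg - Wg)" by (intro sq_closed us)+
    have "nrm Tc = d * nrm (Wg * Bh * mat_adjoint Wg - Pg * Bh * mat_adjoint Pg)"
      unfolding Tc_def using d0 by (simp add: n_smult[OF N, of k] sq_closed s us uas)
    also have "nrm (Wg * Bh * mat_adjoint Wg - Pg * Bh * mat_adjoint Pg) \<le> 2 * nrm Bh * nrm (Wg - Pg)"
    proof -
      have "nrm (Wg * Bh * mat_adjoint Wg - Pg * Bh * mat_adjoint Pg)
         \<le> nrm ((Wg - Pg) * Bh * mat_adjoint Wg) + nrm (Pg * (Bh * (mat_adjoint Wg - mat_adjoint Pg)))"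
        unfolding ident4[OF u(1) u(4) s(2)] by (rule n_add[OF N, of k]) (intro sq_closed s us uas)+
      also have "nrm ((Wg - Pg) * Bh * mat_adjoint Wg) = nrm ((Wg - Pg) * Bh)"
        by (rule n_unit_r[OF N _ ua(3)]) (intro sq_closed s us)
      also have "nrm ((Wg - Pg) * Bh) \<le> nrm (Wg - Pg) * nrm Bh" by (rule n_mult[OF N sWP(1) s(2)])
      also have "nrm (Pg * (Bh * (mat_adjoint Wg - mat_adjoint Pg))) = nrm (Bh * (mat_adjoint Wg - mat_adjoint Pg))"
        by (rule n_unit_l[OF N _ u(1)]) (intro sq_closed s uas)
      also have "\<dots> \<le> nrm Bh * nrm (mat_adjoint Wg - mat_adjoint Pg)" by (rule n_mult[OF N s(2)]) (intro sq_closed uas)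
      also have "nrm (mat_adjoint Wg - mat_adjoint Pg) = nrm (Pg - Wg)"
        unfolding ident3[OF u(4) u(1)] by (rule n_unit[OF N sWP(2) ua(3) ua(1)])
      also have "nrm (Pg - Wg) = nrm (Wg - Pg)" by (rule n_minus_comm[OF N us(1) us(4)])
      finally show ?thesis by (simp add: algebra_simps)
    qed
    finally show ?thesis using d0 by (simp add: mult_left_mono)
  qed
  also have "nrm Td \<le> d * (nrm Bh * (d * nrm c))"
  proof -
    have eq: "Pg * Bh * mat_adjoint Pg * D * mat_adjoint Pgh = Pg * (Bh * (mat_adjoint Pg * D)) * mat_adjoint Pgh"
      by (simp add: kk_simps[where k=k] sq_closed s us uas sD)
    have "nrm Td = d * nrm (Pg * Bh * mat_adjoint Pg * D * mat_adjoint Pgh)"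
      unfolding Td_def using d0 by (simp add: n_smult[OF N, of k] sq_closed s us uas sD)
    also have "nrm (Pg * Bh * mat_adjoint Pg * D * mat_adjoint Pgh) = nrm (Bh * (mat_adjoint Pg * D))"
      unfolding eq by (rule n_unit[OF N _ u(1) ua(2)]) (intro sq_closed s uas sD)
    also have "\<dots> \<le> nrm Bh * nrm (mat_adjoint Pg * D)" by (rule n_mult[OF N s(2)]) (intro sq_closed uas sD)
    also have "nrm (mat_adjoint Pg * D) = d * nrm c" unfolding nD[symmetric] by (rule n_unit_l[OF N sD ua(1)])
    finally show ?thesis using d0 by (simp add: mult_left_mono)
  qed
  finally show ?thesis unfolding Z_def by (simp add: algebra_simps)
qed

end

context
  fixes nrm :: "complex mat \<Rightarrow> real" and k :: nat
  assumes N: "unitarily_invariant_submult_norms nrm"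
begin

lemma pointwise:
  fixes Pg Ph Pgh Wg Wgh Bg Bh Bgh c :: "complex mat" and d :: real
  assumes u: "unitary_mat k Pg" "unitary_mat k Ph" "unitary_mat k Pgh" "unitary_mat k Wg" "unitary_mat k Wgh"
  and s: "sq k Bg" "sq k Bh" "sq k Bgh" "sq k c"
  and d0: "0 \<le> d"
  and Dc: "Pg * Ph - Pgh = complex_of_real d \<cdot>\<^sub>m c"
  shows "nrm (mat_exp ((- complex_of_real d) \<cdot>\<^sub>m Bgh) * Pgh
          - mat_exp ((- complex_of_real d) \<cdot>\<^sub>m Bg) * Pg * (mat_exp ((- complex_of_real d) \<cdot>\<^sub>m Bh) * Ph))
     \<le> d * (nrm (c * mat_adjoint Wgh - (Wg * Bh * mat_adjoint Wg - Bgh + Bg)) + nrm c * nrm (Wgh - Pgh)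
           + d * nrm Bg * nrm c + 2 * nrm Bh * nrm (Wg - Pg) + d * nrm Bh * nrm c)
       + (rf (d * nrm Bgh) + rf (d * nrm Bh) + d\<^sup>2 * nrm Bg * nrm Bh + d * nrm Bg * rf (d * nrm Bh)
          + rf (d * nrm Bg) + d * rf (d * nrm Bg) * nrm Bh + rf (d * nrm Bg) * rf (d * nrm Bh))"
proof -
  let ?dd = "complex_of_real d"
  define Rg where "Rg = mat_exp ((- ?dd) \<cdot>\<^sub>m Bg) - 1\<^sub>m k - (- ?dd) \<cdot>\<^sub>m Bg"
  define Rh where "Rh = mat_exp ((- ?dd) \<cdot>\<^sub>m Bh) - 1\<^sub>m k - (- ?dd) \<cdot>\<^sub>m Bh"
  define Rgh where "Rgh = mat_exp ((- ?dd) \<cdot>\<^sub>m Bgh) - 1\<^sub>m k - (- ?dd) \<cdot>\<^sub>m Bgh"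
  note us = unitary_sq[OF u(1)] unitary_sq[OF u(2)] unitary_sq[OF u(3)]
  have sR: "sq k Rg" "sq k Rh" "sq k Rgh" unfolding Rg_def Rh_def Rgh_def
    by (intro sq_closed sq_mat_exp s)+
  have nR: "nrm Rg \<le> rf (d * nrm Bg)" "nrm Rh \<le> rf (d * nrm Bh)" "nrm Rgh \<le> rf (d * nrm Bgh)"
    unfolding Rg_def Rh_def Rgh_def by (rule rem_bound[OF N s(1) d0], rule rem_bound[OF N s(2) d0], rule rem_bound[OF N s(3) d0])
  have nR0: "0 \<le> nrm Rg" "0 \<le> nrm Rh" by (rule n_nonneg[OF N sR(1)], rule n_nonneg[OF N sR(2)])
  have nB0: "0 \<le> nrm Bg" "0 \<le> nrm Bh" by (rule n_nonneg[OF N s(1)], rule n_nonneg[OF N s(2)])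
  have X: "mat_exp ((- ?dd) \<cdot>\<^sub>m Bgh) * Pgh - mat_exp ((- ?dd) \<cdot>\<^sub>m Bg) * Pg * (mat_exp ((- ?dd) \<cdot>\<^sub>m Bh) * Ph) =
    - ((Pg * Ph - Pgh) + ?dd \<cdot>\<^sub>m (Bgh * Pgh - Bg * Pg * Ph - Pg * Bh * Ph))
    + (Rgh * Pgh - Pg * Rh * Ph - (?dd * ?dd) \<cdot>\<^sub>m (Bg * Pg * Bh * Ph) + ?dd \<cdot>\<^sub>m (Bg * Pg * Rh * Ph)
       - Rg * Pg * Ph + ?dd \<cdot>\<^sub>m (Rg * Pg * Bh * Ph) - Rg * Pg * Rh * Ph)"
    by (rule ident1[OF u(1,2,3) s(1,2,3) sR(1,2,3)])
      (unfold Rg_def Rh_def Rgh_def, (rule E_expand, rule s)+)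
  let ?Q = "(Pg * Ph - Pgh) + ?dd \<cdot>\<^sub>m (Bgh * Pgh - Bg * Pg * Ph - Pg * Bh * Ph)"
  let ?T1 = "Rgh * Pgh" and ?T2 = "Pg * Rh * Ph" and ?T3 = "(?dd * ?dd) \<cdot>\<^sub>m (Bg * Pg * Bh * Ph)"
  and ?T4 = "?dd \<cdot>\<^sub>m (Bg * Pg * Rh * Ph)" and ?T5 = "Rg * Pg * Ph" and ?T6 = "?dd \<cdot>\<^sub>m (Rg * Pg * Bh * Ph)"
  and ?T7 = "Rg * Pg * Rh * Ph"
  have sQ: "sq k ?Q" by (intro sq_closed s us)
  have sT: "sq k ?T1" "sq k ?T2" "sq k ?T3" "sq k ?T4" "sq k ?T5" "sq k ?T6" "sq k ?T7"
    by (intro sq_closed s us sR)+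
  have "nrm (mat_exp ((- ?dd) \<cdot>\<^sub>m Bgh) * Pgh - mat_exp ((- ?dd) \<cdot>\<^sub>m Bg) * Pg * (mat_exp ((- ?dd) \<cdot>\<^sub>m Bh) * Ph))
     \<le> nrm (- ?Q) + nrm (?T1 - ?T2 - ?T3 + ?T4 - ?T5 + ?T6 - ?T7)"
    unfolding X by (rule n_add[OF N, of k]) (intro sq_closed sT sQ)+
  also have "nrm (- ?Q) = nrm ?Q" by (rule n_uminus[OF N sQ])
  also have "nrm ?Q \<le> d * (nrm (c * mat_adjoint Wgh - (Wg * Bh * mat_adjoint Wg - Bgh + Bg)) + nrm c * nrm (Wgh - Pgh)
           + d * nrm Bg * nrm c + 2 * nrm Bh * nrm (Wg - Pg) + d * nrm Bh * nrm c)"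
    by (rule Q_bound[OF N u s d0 Dc])
  also have "nrm (?T1 - ?T2 - ?T3 + ?T4 - ?T5 + ?T6 - ?T7) \<le>
     nrm ?T1 + nrm ?T2 + nrm ?T3 + nrm ?T4 + nrm ?T5 + nrm ?T6 + nrm ?T7"
    by (rule n7[OF N sT])
  also have "nrm ?T1 = nrm Rgh" by (rule n_unit_r[OF N sR(3) u(3)])
  also have "nrm ?T2 = nrm Rh" by (rule n_unit[OF N sR(2) u(1) u(2)])
  also have "nrm ?T3 = d\<^sup>2 * nrm (Bg * Pg * Bh * Ph)"
    by (simp add: n_smult[OF N, of k] sq_closed s us power2_eq_square norm_mult)
  also have "nrm (Bg * Pg * Bh * Ph) \<le> nrm Bg * nrm Bh" by (rule n_unit4[OF N s(1) s(2) u(1) u(2)])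
  also have "nrm ?T4 = d * nrm (Bg * Pg * Rh * Ph)"
    using d0 by (simp add: n_smult[OF N, of k] sq_closed s us sR)
  also have "nrm (Bg * Pg * Rh * Ph) \<le> nrm Bg * nrm Rh" by (rule n_unit4[OF N s(1) sR(2) u(1) u(2)])
  also have "nrm ?T5 = nrm Rg" by (rule n_unit3[OF N sR(1) u(1) u(2)])
  also have "nrm ?T6 = d * nrm (Rg * Pg * Bh * Ph)"
    using d0 by (simp add: n_smult[OF N, of k] sq_closed s us sR)
  also have "nrm (Rg * Pg * Bh * Ph) \<le> nrm Rg * nrm Bh" by (rule n_unit4[OF N sR(1) s(2) u(1) u(2)])
  also have "nrm ?T7 \<le> nrm Rg * nrm Rh" by (rule n_unit4[OF N sR(1) sR(2) u(1) u(2)])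
  finally have main: "nrm (mat_exp ((- ?dd) \<cdot>\<^sub>m Bgh) * Pgh - mat_exp ((- ?dd) \<cdot>\<^sub>m Bg) * Pg * (mat_exp ((- ?dd) \<cdot>\<^sub>m Bh) * Ph))
    \<le> d * (nrm (c * mat_adjoint Wgh - (Wg * Bh * mat_adjoint Wg - Bgh + Bg)) + nrm c * nrm (Wgh - Pgh)
           + d * nrm Bg * nrm c + 2 * nrm Bh * nrm (Wg - Pg) + d * nrm Bh * nrm c)
      + (nrm Rgh + nrm Rh + d\<^sup>2 * (nrm Bg * nrm Bh) + d * (nrm Bg * nrm Rh) + nrm Rg
         + d * (nrm Rg * nrm Bh) + nrm Rg * nrm Rh)"
    using d0 by (simp add: mult_left_mono)
  have r: "nrm Rgh + nrm Rh + d\<^sup>2 * (nrm Bg * nrm Bh) + d * (nrm Bg * nrm Rh) + nrm Rg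
         + d * (nrm Rg * nrm Bh) + nrm Rg * nrm Rh
     \<le> rf (d * nrm Bgh) + rf (d * nrm Bh) + d\<^sup>2 * nrm Bg * nrm Bh + d * nrm Bg * rf (d * nrm Bh)
          + rf (d * nrm Bg) + d * rf (d * nrm Bg) * nrm Bh + rf (d * nrm Bg) * rf (d * nrm Bh)"
  proof -
    have a: "d * (nrm Bg * nrm Rh) \<le> d * nrm Bg * rf (d * nrm Bh)"
      using nR(2) d0 nB0 by (simp add: mult_left_mono mult.assoc)
    have b: "d * (nrm Rg * nrm Bh) \<le> d * rf (d * nrm Bg) * nrm Bh"
      using nR(1) d0 nB0 by (simp add: mult_left_mono mult_right_mono mult.assoc)
    have c: "nrm Rg * nrm Rh \<le> rf (d * nrm Bg) * rf (d * nrm Bh)"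
      using nR nR0 by (intro mult_mono) auto
    show ?thesis using a b c nR by (simp add: algebra_simps)
  qed
  show ?thesis using main r by linarith
qed

end

lemma rf_bounds: "0 \<le> x \<Longrightarrow> x \<le> 1 \<Longrightarrow> 0 \<le> rf x \<and> rf x \<le> x\<^sup>2"
proof -
  assume x: "0 \<le> x" "x \<le> 1"
  have 1: "1 + x \<le> exp x" by (rule exp_ge_add_one_self)
  have 2: "exp x \<le> 1 + x + x\<^sup>2" by (rule exp_bound[OF x])
  show ?thesis unfolding rf_def using 1 2 by linarith
qed

lemma rf_le: assumes "0 \<le> x" "x \<le> y" "y \<le> 1" shows "0 \<le> rf x" "rf x \<le> y\<^sup>2"
proof -
  have "x \<le> 1" using assms by simp
  then have a: "0 \<le> rf x" "rf x \<le> x\<^sup>2" using rf_bounds assms(1) by auto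
  have "x\<^sup>2 \<le> y\<^sup>2" using assms by (intro power_mono) auto
  then show "0 \<le> rf x" "rf x \<le> y\<^sup>2" using a by auto
qed

lemma rem_real:
  fixes p q r yg yh ygh :: real
  assumes p: "0 \<le> p" "p \<le> yg" "yg \<le> 1" and q: "0 \<le> q" "q \<le> yh" "yh \<le> 1" and r: "0 \<le> r" "r \<le> ygh" "ygh \<le> 1"
  shows "rf r + rf q + p * q + p * rf q + rf p + rf p * q + rf p * rf q \<le> ygh\<^sup>2 + yh\<^sup>2 + 2 * yg * yh + 3 * yg\<^sup>2"
proof -
  have rp: "0 \<le> rf p" "rf p \<le> yg\<^sup>2" using rf_le[OF p] by auto
  have rq: "0 \<le> rf q" "rf q \<le> yh\<^sup>2" using rf_le[OF q] by auto
  have rr: "rf r \<le> ygh\<^sup>2" using rf_le[OF r] by auto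
  have yg0: "0 \<le> yg" and yh0: "0 \<le> yh" using p q by auto
  have yh2: "yh\<^sup>2 \<le> yh" using yh0 q(3) by (simp add: power2_eq_square mult_left_le_one_le)
  have yg2: "yg\<^sup>2 \<le> 1" using yg0 p(3) by (simp add: power_le_one)
  have yhh2: "yh\<^sup>2 \<le> 1" using yh0 q(3) by (simp add: power_le_one)
  have t1: "p * q \<le> yg * yh" using p q by (intro mult_mono) auto
  have t2: "p * rf q \<le> yg * yh"
  proof -
    have "p * rf q \<le> yg * yh\<^sup>2" using p rq by (intro mult_mono) auto
    also have "\<dots> \<le> yg * yh" using yh2 yg0 by (intro mult_left_mono) auto
    finally show ?thesis .
  qed
  have t3: "rf p * q \<le> yg\<^sup>2"
  proof -
    have "rf p * q \<le> yg\<^sup>2 * yh" using rp q by (intro mult_mono) auto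
    also have "\<dots> \<le> yg\<^sup>2 * 1" using q(3) by (intro mult_left_mono) auto
    finally show ?thesis by simp
  qed
  have t4: "rf p * rf q \<le> yg\<^sup>2"
  proof -
    have "rf p * rf q \<le> yg\<^sup>2 * yh\<^sup>2" using rp rq by (intro mult_mono) auto
    also have "\<dots> \<le> yg\<^sup>2 * 1" using yhh2 by (intro mult_left_mono) auto
    finally show ?thesis by simp
  qed
  show ?thesis using t1 t2 t3 t4 rp rq rr by linarith
qed

context
  fixes nrm :: "complex mat \<Rightarrow> real" and k :: nat
  assumes N: "unitarily_invariant_submult_norms nrm"
begin

lemma D_bound_pw:
  assumes u: "unitary_mat k Pg" "unitary_mat k Ph" "unitary_mat k Pgh" "unitary_mat k Wg" "unitary_mat k Wh" "unitary_mat k Wgh"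
  shows "nrm (Pg * Ph - Pgh) \<le> nrm (Wg - Pg) + nrm (Wh - Ph) + nrm (Wg * Wh - Wgh) + nrm (Wgh - Pgh)"
proof -
  note cc = unitary_sq[OF u(1)] unitary_sq[OF u(2)] unitary_sq[OF u(3)] unitary_sq[OF u(4)] unitary_sq[OF u(5)] unitary_sq[OF u(6)]
  note dd = cc[THEN sq_dims(1)] cc[THEN sq_dims(2)]
  have e: "Pg * Ph - Pgh = - ((Wg - Pg) * Ph + Wg * (Wh - Ph)) + (Wg * Wh - Wgh) + (Wgh - Pgh)"
    apply (simp add: cc kk_simps[where k=k] sq_closed)
    apply (rule eq_matI)
      apply (simp_all add: dd algebra_simps del: index_mult_mat(1))
    done
  have s: "sq k ((Wg - Pg) * Ph + Wg * (Wh - Ph))" "sq k (Wg * Wh - Wgh)" "sq k (Wgh - Pgh)"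
    "sq k ((Wg - Pg) * Ph)" "sq k (Wg * (Wh - Ph))" "sq k (Wg - Pg)" "sq k (Wh - Ph)"
    by (intro sq_closed cc)+
  have "nrm (Pg * Ph - Pgh) \<le> nrm (- ((Wg - Pg) * Ph + Wg * (Wh - Ph)) + (Wg * Wh - Wgh)) + nrm (Wgh - Pgh)"
    unfolding e by (rule n_add[OF N, of k]) (intro sq_closed s)+
  also have "nrm (- ((Wg - Pg) * Ph + Wg * (Wh - Ph)) + (Wg * Wh - Wgh)) \<le> nrm (- ((Wg - Pg) * Ph + Wg * (Wh - Ph))) + nrm (Wg * Wh - Wgh)"
    by (rule n_add[OF N, of k]) (intro sq_closed s)+
  also have "nrm (- ((Wg - Pg) * Ph + Wg * (Wh - Ph))) = nrm ((Wg - Pg) * Ph + Wg * (Wh - Ph))"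
    by (rule n_uminus[OF N s(1)])
  also have "\<dots> \<le> nrm ((Wg - Pg) * Ph) + nrm (Wg * (Wh - Ph))" by (rule n_add[OF N s(4) s(5)])
  also have "nrm ((Wg - Pg) * Ph) = nrm (Wg - Pg)" by (rule n_unit_r[OF N s(6) u(2)])
  also have "nrm (Wg * (Wh - Ph)) = nrm (Wh - Ph)" by (rule n_unit_l[OF N s(7) u(4)])
  finally show ?thesis by simp
qed

lemma W_rel_pw:
  assumes u: "unitary_mat k Wg" "unitary_mat k Wh" "unitary_mat k Wgh"
  shows "nrm (Wg * Wh - Wgh) = nrm (Wgh * mat_adjoint (Wg * Wh) - 1\<^sub>m k)"
proof -
  have uu: "unitary_mat k (Wg * Wh)" by (rule unitary_mult[OF u(1,2)])
  note cc = unitary_sq[OF uu] unitary_sq[OF u(3)] unitary_sq[OF unitary_adj[OF uu]] unitary_sq[OF u(1)] unitary_sq[OF u(2)]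
  note dd = cc[THEN sq_dims(1)] cc[THEN sq_dims(2)]
  have s: "sq k (Wgh * mat_adjoint (Wg * Wh) - 1\<^sub>m k)" by (intro sq_closed cc)
  have e: "Wg * Wh - Wgh = - ((Wgh * mat_adjoint (Wg * Wh) - 1\<^sub>m k) * (Wg * Wh))"
    apply (simp add: cc kk_simps[where k=k] sq_closed unitary_l[OF uu] unitary_l2[OF uu])
    apply (rule eq_matI)
      apply (simp_all add: dd algebra_simps del: index_mult_mat(1))
    done
  show ?thesis unfolding e
    by (simp add: n_uminus[OF N, of k] sq_closed s cc n_unit_r[OF N s uu])
qed

lemma c_facts_pw:
  assumes d0: "0 \<le> d" and sD: "sq k D" and nD: "nrm D \<le> C * d" and C: "0 \<le> C"
  and c: "c = (if d > 0 then (1 / complex_of_real d) \<cdot>\<^sub>m D else 0\<^sub>m k k)"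
  shows "D = complex_of_real d \<cdot>\<^sub>m c" "nrm c \<le> C" "sq k c"
proof -
  show "sq k c" unfolding c by (auto intro: sq_closed sD)
  show "D = complex_of_real d \<cdot>\<^sub>m c"
  proof (cases "d > 0")
    case True
    then show ?thesis unfolding c using sD unfolding sq_def by (rule_tac eq_matI) simp_all
  next
    case False
    then have d: "d = 0" using d0 by simp
    have "nrm D = 0" using nD d n_nonneg[OF N sD] by simp
    then have "D = 0\<^sub>m k k" using n_zero_iff[OF N sD] by simp
    then show ?thesis unfolding c using False d by (rule_tac eq_matI) simp_all
  qed
  show "nrm c \<le> C"
  proof (cases "d > 0")
    case True
    have "nrm c = nrm D / d" unfolding c using True by (simp add: n_smult[OF N sD] norm_divide)
    also have "\<dots> \<le> C" using nD True by (simp add: divide_le_eq)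
    finally show ?thesis .
  next
    case False
    then show ?thesis unfolding c using C by (simp add: n_zero[OF N])
  qed
qed

end

theorem lemma3p5:
  fixes U :: "nat filter" and G :: "('g, 'm) monoid_scheme" and S :: "'s set"
    and R :: "'s word set" and \<pi> :: "'s word \<Rightarrow> 'g"
    and nrm :: "complex mat \<Rightarrow> real" and k :: "nat \<Rightarrow> nat"
    and \<phi> :: "nat \<Rightarrow> 's \<Rightarrow> complex mat" and \<sigma> :: "'g \<Rightarrow> 's word"
    and pt :: "nat \<Rightarrow> 'g \<Rightarrow> complex mat" and \<beta> :: "nat \<Rightarrow> 'g \<Rightarrow> complex mat"
  assumes ultra: "nonprincipal_ultrafilter U"
    and pres: "is_presentation G S R \<pi>"
    and norms: "unitarily_invariant_submult_norms nrm"
    and phi_unitary: "\<forall>n. \<forall>s \<in> S. unitary_mat (k n) (\<phi> n s)"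
    and def_lim: "((\<lambda>n. deficiency nrm (k n) R (\<phi> n)) \<longlongrightarrow> 0) U"
    and sec: "\<forall>g \<in> carrier G. \<sigma> g \<in> words S \<and> \<pi> (\<sigma> g) = g"
    and pt_unitary: "\<forall>n. \<forall>g \<in> carrier G. unitary_mat (k n) (pt n g)"
    and pt_one: "\<forall>n. pt n \<one>\<^bsub>G\<^esub> = 1\<^sub>m (k n)"
    and pt_inv: "\<forall>n. \<forall>g \<in> carrier G. pt n (inv\<^bsub>G\<^esub> g) = mat_adjoint (pt n g)"
    and pt_close: "\<forall>g \<in> carrier G. \<exists>C. eventually (\<lambda>n.
        nrm (word_eval (k n) (\<phi> n) (\<sigma> g) - pt n g) \<le> C * deficiency nrm (k n) R (\<phi> n)) U"
    and beta_mat: "\<forall>n. \<forall>g \<in> carrier G. \<beta> n g \<in> carrier_mat (k n) (k n)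
                       \<and> mat_adjoint (\<beta> n g) = - \<beta> n g"
    and beta_bdd: "\<forall>g \<in> carrier G. \<exists>C. \<forall>n. nrm (\<beta> n g) \<le> C"
    and beta_eq: "\<forall>g \<in> carrier G. \<forall>h \<in> carrier G. ueq U nrm
        (\<lambda>n. coc nrm k R \<phi> G pt n g h * mat_adjoint (word_eval (k n) (\<phi> n) (\<sigma> (g \<otimes>\<^bsub>G\<^esub> h))))
        (\<lambda>n. word_eval (k n) (\<phi> n) (\<sigma> g) * \<beta> n h * mat_adjoint (word_eval (k n) (\<phi> n) (\<sigma> g))
             - \<beta> n (g \<otimes>\<^bsub>G\<^esub> h) + \<beta> n g)"
  shows "\<forall>g \<in> carrier G. \<forall>h \<in> carrier G. small_o_U U
           (\<lambda>n. nrm (psi nrm k R \<phi> \<beta> pt n (g \<otimes>\<^bsub>G\<^esub> h)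
                     - psi nrm k R \<phi> \<beta> pt n g * psi nrm k R \<phi> \<beta> pt n h))
           (\<lambda>n. deficiency nrm (k n) R (\<phi> n))"
proof (intro ballI)
  fix g h assume g: "g \<in> carrier G" and h: "h \<in> carrier G"
  have G: "group G" and fin: "finite R" and RS: "R \<subseteq> words S"
    using pres unfolding is_presentation_def by blast+
  have gh: "g \<otimes>\<^bsub>G\<^esub> h \<in> carrier G" using G g h by (simp add: group.is_monoid monoid.m_closed)
  define d where "d n = deficiency nrm (k n) R (\<phi> n)" for n
  have d0: "0 \<le> d n" for n unfolding d_def by (rule def_nonneg[OF fin])
  have uo: "unit_on (k n) S (\<phi> n)" for n using phi_unitary unfolding unit_on_def by blast
  have ws: "\<sigma> g \<in> words S" "\<sigma> h \<in> words S" "\<sigma> (g \<otimes>\<^bsub>G\<^esub> h) \<in> words S" using sec g h gh by auto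
  define Wg where "Wg n = word_eval (k n) (\<phi> n) (\<sigma> g)" for n
  define Wh where "Wh n = word_eval (k n) (\<phi> n) (\<sigma> h)" for n
  define Wgh where "Wgh n = word_eval (k n) (\<phi> n) (\<sigma> (g \<otimes>\<^bsub>G\<^esub> h))" for n
  have uW: "unitary_mat (k n) (Wg n)" "unitary_mat (k n) (Wh n)" "unitary_mat (k n) (Wgh n)" for n
    unfolding Wg_def Wh_def Wgh_def by (rule word_eval_unitary[OF uo ws(1)], rule word_eval_unitary[OF uo ws(2)],
      rule word_eval_unitary[OF uo ws(3)])
  have uP: "unitary_mat (k n) (pt n g)" "unitary_mat (k n) (pt n h)" "unitary_mat (k n) (pt n (g \<otimes>\<^bsub>G\<^esub> h))" for n
    using pt_unitary g h gh by blast+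
  have sB: "sq (k n) (\<beta> n g)" "sq (k n) (\<beta> n h)" "sq (k n) (\<beta> n (g \<otimes>\<^bsub>G\<^esub> h))" for n
    using beta_mat g h gh unfolding sq_def by blast+
  define c where "c n = coc nrm k R \<phi> G pt n g h" for n
  have c_eq: "c n = (if d n > 0 then (1 / complex_of_real (d n)) \<cdot>\<^sub>m (pt n g * pt n h - pt n (g \<otimes>\<^bsub>G\<^esub> h)) else 0\<^sub>m (k n) (k n))" for n
    unfolding c_def coc_def d_def Let_def by simp
  obtain Cr where Cr: "Cr \<ge> 0" "\<forall>kk f. unit_on kk S f \<longrightarrow> nrm (word_eval kk f (\<sigma> (g \<otimes>\<^bsub>G\<^esub> h) @ word_inv (\<sigma> g @ \<sigma> h)) - 1\<^sub>m kk) \<le> Cr * deficiency nrm kk R f"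
    using rel_triv_bound[OF norms RS fin pres_rel[OF pres sec g h]] by blast
  have w0: "word_eval (k n) (\<phi> n) (\<sigma> (g \<otimes>\<^bsub>G\<^esub> h) @ word_inv (\<sigma> g @ \<sigma> h)) = Wgh n * mat_adjoint (Wg n * Wh n)" for n
  proof -
    have "word_eval (k n) (\<phi> n) (\<sigma> (g \<otimes>\<^bsub>G\<^esub> h) @ word_inv (\<sigma> g @ \<sigma> h))
       = Wgh n * word_eval (k n) (\<phi> n) (word_inv (\<sigma> g @ \<sigma> h))"
      unfolding Wgh_def by (rule word_eval_append[OF uo ws(3)]) (use ws in simp)
    also have "word_eval (k n) (\<phi> n) (word_inv (\<sigma> g @ \<sigma> h)) = mat_adjoint (word_eval (k n) (\<phi> n) (\<sigma> g @ \<sigma> h))"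
      by (rule word_eval_inv[OF uo]) (use ws in simp)
    also have "word_eval (k n) (\<phi> n) (\<sigma> g @ \<sigma> h) = Wg n * Wh n"
      unfolding Wg_def Wh_def by (rule word_eval_append[OF uo ws(1,2)])
    finally show ?thesis .
  qed
  have nWW: "nrm (Wg n * Wh n - Wgh n) \<le> Cr * d n" for n
    using W_rel_pw[OF norms uW(1,2,3)] Cr(2) uo w0 unfolding d_def by metis
  obtain Cg where Cg: "eventually (\<lambda>n. nrm (Wg n - pt n g) \<le> Cg * d n) U"
    using pt_close g unfolding Wg_def d_def by blast
  obtain Ch where Ch: "eventually (\<lambda>n. nrm (Wh n - pt n h) \<le> Ch * d n) U"
    using pt_close h unfolding Wh_def d_def by blast
  obtain Cgh where Cgh: "eventually (\<lambda>n. nrm (Wgh n - pt n (g \<otimes>\<^bsub>G\<^esub> h)) \<le> Cgh * d n) U"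
    using pt_close gh unfolding Wgh_def d_def by blast
  obtain Kg where Kg: "\<forall>n. nrm (\<beta> n g) \<le> Kg" using beta_bdd g by blast
  obtain Kh where Kh: "\<forall>n. nrm (\<beta> n h) \<le> Kh" using beta_bdd h by blast
  obtain Kgh where Kgh: "\<forall>n. nrm (\<beta> n (g \<otimes>\<^bsub>G\<^esub> h)) \<le> Kgh" using beta_bdd gh by blast
  have K0s: "0 \<le> Kg" "0 \<le> Kh" "0 \<le> Kgh"
    using Kg Kh Kgh n_nonneg[OF norms sB(1), of 0] n_nonneg[OF norms sB(2), of 0] n_nonneg[OF norms sB(3), of 0]
    by (meson order_trans)+
  define Cd where "Cd = \<bar>Cg\<bar> + \<bar>Ch\<bar> + Cr + \<bar>Cgh\<bar>"
  have Cd0: "0 \<le> Cd" unfolding Cd_def using Cr(1) by simp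
  define K0 where "K0 = Kgh\<^sup>2 + Kh\<^sup>2 + 2 * Kg * Kh + 3 * Kg\<^sup>2"
  define Z where "Z n = c n * mat_adjoint (Wgh n) - (Wg n * \<beta> n h * mat_adjoint (Wg n) - \<beta> n (g \<otimes>\<^bsub>G\<^esub> h) + \<beta> n g)" for n
  define e2 where "e2 n = nrm (Wg n - pt n g)" for n
  define e3 where "e3 n = nrm (Wgh n - pt n (g \<otimes>\<^bsub>G\<^esub> h))" for n
  define ep where "ep n = nrm (Z n) + Cd * e3 n + d n * Kg * Cd + 2 * Kh * e2 n + d n * Kh * Cd + d n * K0" for n
  define x where "x n = nrm (psi nrm k R \<phi> \<beta> pt n (g \<otimes>\<^bsub>G\<^esub> h) - psi nrm k R \<phi> \<beta> pt n g * psi nrm k R \<phi> \<beta> pt n h)" for n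
  have x0: "0 \<le> x n" for n
  proof -
    have "sq (k n) (psi nrm k R \<phi> \<beta> pt n (g \<otimes>\<^bsub>G\<^esub> h) - psi nrm k R \<phi> \<beta> pt n g * psi nrm k R \<phi> \<beta> pt n h)"
      unfolding psi_def by (intro sq_closed sq_mat_exp sB unitary_sq uP)
    then show ?thesis unfolding x_def by (rule n_nonneg[OF norms])
  qed
  have e20: "0 \<le> e2 n" "0 \<le> e3 n" for n unfolding e2_def e3_def
    by (rule n_nonneg[OF norms sq_closed(2)[OF unitary_sq[OF uW(1)] unitary_sq[OF uP(1)]]],
        rule n_nonneg[OF norms sq_closed(2)[OF unitary_sq[OF uW(3)] unitary_sq[OF uP(3)]]])
  have ep0: "0 \<le> ep n" for n
  proof -
    have "0 \<le> nrm (Z n)" unfolding Z_def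
    proof (rule n_nonneg[OF norms])
      have "sq (k n) (pt n g * pt n h - pt n (g \<otimes>\<^bsub>G\<^esub> h))"
        by (rule sq_closed(2)[OF sq_closed(3)[OF unitary_sq[OF uP(1)] unitary_sq[OF uP(2)]] unitary_sq[OF uP(3)]])
      then have "sq (k n) (c n)" unfolding c_eq by (simp add: sq_closed)
      then show "sq (k n) (c n * mat_adjoint (Wgh n) - (Wg n * \<beta> n h * mat_adjoint (Wg n) - \<beta> n (g \<otimes>\<^bsub>G\<^esub> h) + \<beta> n g))"
        by (intro sq_closed sB unitary_sq[OF uW(1)] unitary_sq[OF uW(3)])
    qed
    moreover have "0 \<le> K0" unfolding K0_def using K0s by simp
    ultimately show ?thesis unfolding ep_def using e20[of n] d0[of n] K0s Cd0 by simp
  qed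
  have dsmall: "eventually (\<lambda>n. d n < 1 / (1 + Kg + Kh + Kgh)) U"
    using order_tendstoD(2)[OF def_lim[folded d_def[abs_def]]] K0s by simp
  have key: "eventually (\<lambda>n. x n \<le> d n * ep n) U"
    using Cg Ch Cgh dsmall
  proof eventually_elim
    fix n assume cg: "nrm (Wg n - pt n g) \<le> Cg * d n" and ch: "nrm (Wh n - pt n h) \<le> Ch * d n"
      and cgh: "nrm (Wgh n - pt n (g \<otimes>\<^bsub>G\<^esub> h)) \<le> Cgh * d n" and ds: "d n < 1 / (1 + Kg + Kh + Kgh)"
    have dn: "0 \<le> d n" by (rule d0)
    have nb: "0 \<le> nrm (\<beta> n g)" "0 \<le> nrm (\<beta> n h)" "0 \<le> nrm (\<beta> n (g \<otimes>\<^bsub>G\<^esub> h))"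
      by (rule n_nonneg[OF norms sB(1)], rule n_nonneg[OF norms sB(2)], rule n_nonneg[OF norms sB(3)])
    have bK: "nrm (\<beta> n g) \<le> Kg" "nrm (\<beta> n h) \<le> Kh" "nrm (\<beta> n (g \<otimes>\<^bsub>G\<^esub> h)) \<le> Kgh"
      using Kg Kh Kgh by blast+
    have cg': "nrm (Wg n - pt n g) \<le> \<bar>Cg\<bar> * d n" using cg dn by (meson abs_ge_self mult_right_mono order_trans)
    have ch': "nrm (Wh n - pt n h) \<le> \<bar>Ch\<bar> * d n" using ch dn by (meson abs_ge_self mult_right_mono order_trans)
    have cgh': "nrm (Wgh n - pt n (g \<otimes>\<^bsub>G\<^esub> h)) \<le> \<bar>Cgh\<bar> * d n" using cgh dn by (meson abs_ge_self mult_right_mono order_trans)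
    have sD: "sq (k n) (pt n g * pt n h - pt n (g \<otimes>\<^bsub>G\<^esub> h))"
      by (rule sq_closed(2)[OF sq_closed(3)[OF unitary_sq[OF uP(1)] unitary_sq[OF uP(2)]] unitary_sq[OF uP(3)]])
    have nD: "nrm (pt n g * pt n h - pt n (g \<otimes>\<^bsub>G\<^esub> h)) \<le> Cd * d n"
    proof -
      have "nrm (pt n g * pt n h - pt n (g \<otimes>\<^bsub>G\<^esub> h)) \<le> nrm (Wg n - pt n g) + nrm (Wh n - pt n h)
          + nrm (Wg n * Wh n - Wgh n) + nrm (Wgh n - pt n (g \<otimes>\<^bsub>G\<^esub> h))"
        by (rule D_bound_pw[OF norms uP(1,2,3) uW(1,2,3)])
      also have "\<dots> \<le> \<bar>Cg\<bar> * d n + \<bar>Ch\<bar> * d n + Cr * d n + \<bar>Cgh\<bar> * d n"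
        using cg' ch' cgh' nWW[of n] by linarith
      finally show ?thesis unfolding Cd_def by (simp add: algebra_simps)
    qed
    note cf = c_facts_pw[OF norms dn sD nD Cd0 c_eq[of n]]
    have xe: "x n = nrm (mat_exp ((- complex_of_real (d n)) \<cdot>\<^sub>m \<beta> n (g \<otimes>\<^bsub>G\<^esub> h)) * pt n (g \<otimes>\<^bsub>G\<^esub> h)
          - mat_exp ((- complex_of_real (d n)) \<cdot>\<^sub>m \<beta> n g) * pt n g * (mat_exp ((- complex_of_real (d n)) \<cdot>\<^sub>m \<beta> n h) * pt n h))"
      unfolding x_def psi_def d_def by simp
    have pw: "x n \<le> d n * (nrm (Z n) + nrm (c n) * e3 n + d n * nrm (\<beta> n g) * nrm (c n) + 2 * nrm (\<beta> n h) * e2 n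
           + d n * nrm (\<beta> n h) * nrm (c n))
       + (rf (d n * nrm (\<beta> n (g \<otimes>\<^bsub>G\<^esub> h))) + rf (d n * nrm (\<beta> n h)) + (d n)\<^sup>2 * nrm (\<beta> n g) * nrm (\<beta> n h)
          + d n * nrm (\<beta> n g) * rf (d n * nrm (\<beta> n h))
          + rf (d n * nrm (\<beta> n g)) + d n * rf (d n * nrm (\<beta> n g)) * nrm (\<beta> n h)
          + rf (d n * nrm (\<beta> n g)) * rf (d n * nrm (\<beta> n h)))"
      unfolding xe Z_def e2_def e3_def
      by (rule pointwise[OF norms uP(1,2,3) uW(1) uW(3) sB(1,2,3) cf(3) dn cf(1)])
    have dK: "d n * Kg \<le> 1" "d n * Kh \<le> 1" "d n * Kgh \<le> 1"
    proof -
      have "d n * (1 + Kg + Kh + Kgh) \<le> 1" using ds K0s by (simp add: field_simps)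
      then show "d n * Kg \<le> 1" "d n * Kh \<le> 1" "d n * Kgh \<le> 1" using K0s dn
        by (simp_all add: algebra_simps) (smt (verit) mult_nonneg_nonneg)+
    qed
    have rem: "rf (d n * nrm (\<beta> n (g \<otimes>\<^bsub>G\<^esub> h))) + rf (d n * nrm (\<beta> n h)) + (d n)\<^sup>2 * nrm (\<beta> n g) * nrm (\<beta> n h)
          + d n * nrm (\<beta> n g) * rf (d n * nrm (\<beta> n h))
          + rf (d n * nrm (\<beta> n g)) + d n * rf (d n * nrm (\<beta> n g)) * nrm (\<beta> n h)
          + rf (d n * nrm (\<beta> n g)) * rf (d n * nrm (\<beta> n h)) \<le> d n * (d n * K0)"
    proof -
      have p: "0 \<le> d n * nrm (\<beta> n g)" "d n * nrm (\<beta> n g) \<le> d n * Kg" "d n * Kg \<le> 1"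
        using dn nb bK dK by (auto intro: mult_left_mono)
      have q: "0 \<le> d n * nrm (\<beta> n h)" "d n * nrm (\<beta> n h) \<le> d n * Kh" "d n * Kh \<le> 1"
        using dn nb bK dK by (auto intro: mult_left_mono)
      have r: "0 \<le> d n * nrm (\<beta> n (g \<otimes>\<^bsub>G\<^esub> h))" "d n * nrm (\<beta> n (g \<otimes>\<^bsub>G\<^esub> h)) \<le> d n * Kgh" "d n * Kgh \<le> 1"
        using dn nb bK dK by (auto intro: mult_left_mono)
      have q1: "(d n)\<^sup>2 * nrm (\<beta> n g) * nrm (\<beta> n h) = (d n * nrm (\<beta> n g)) * (d n * nrm (\<beta> n h))"
        by (simp add: power2_eq_square algebra_simps)
      have q2: "d n * nrm (\<beta> n g) * rf (d n * nrm (\<beta> n h)) = (d n * nrm (\<beta> n g)) * rf (d n * nrm (\<beta> n h))" by simp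
      have q3: "d n * rf (d n * nrm (\<beta> n g)) * nrm (\<beta> n h) = rf (d n * nrm (\<beta> n g)) * (d n * nrm (\<beta> n h))"
        by (simp add: algebra_simps)
      have q4: "(d n * Kgh)\<^sup>2 + (d n * Kh)\<^sup>2 + 2 * (d n * Kg) * (d n * Kh) + 3 * (d n * Kg)\<^sup>2 = d n * (d n * K0)"
        unfolding K0_def by (simp add: power2_eq_square algebra_simps)
      show ?thesis using rem_real[OF p q r] unfolding q1 q3 q4 by linarith
    qed
    have inner: "nrm (Z n) + nrm (c n) * e3 n + d n * nrm (\<beta> n g) * nrm (c n) + 2 * nrm (\<beta> n h) * e2 n
           + d n * nrm (\<beta> n h) * nrm (c n) \<le> nrm (Z n) + Cd * e3 n + d n * Kg * Cd + 2 * Kh * e2 n + d n * Kh * Cd"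
    proof -
      have nc0: "0 \<le> nrm (c n)" by (rule n_nonneg[OF norms cf(3)])
      have a: "nrm (c n) * e3 n \<le> Cd * e3 n" using cf(2) e20 by (intro mult_right_mono) auto
      have b: "d n * nrm (\<beta> n g) * nrm (c n) \<le> d n * Kg * Cd"
        using cf(2) bK dn nb nc0 K0s by (intro mult_mono mult_left_mono) auto
      have c: "2 * nrm (\<beta> n h) * e2 n \<le> 2 * Kh * e2 n" using bK e20 by (intro mult_right_mono) auto
      have e: "d n * nrm (\<beta> n h) * nrm (c n) \<le> d n * Kh * Cd"
        using cf(2) bK dn nb nc0 K0s by (intro mult_mono mult_left_mono) auto
      show ?thesis using a b c e by linarith
    qed
    have "x n \<le> d n * (nrm (Z n) + Cd * e3 n + d n * Kg * Cd + 2 * Kh * e2 n + d n * Kh * Cd) + d n * (d n * K0)"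
      using pw rem mult_left_mono[OF inner dn] by linarith
    then show "x n \<le> d n * ep n" unfolding ep_def by (simp add: algebra_simps)
  qed
  show "small_o_U U (\<lambda>n. nrm (psi nrm k R \<phi> \<beta> pt n (g \<otimes>\<^bsub>G\<^esub> h) - psi nrm k R \<phi> \<beta> pt n g * psi nrm k R \<phi> \<beta> pt n h))
           (\<lambda>n. deficiency nrm (k n) R (\<phi> n))"
  proof -
    have dlim: "(d \<longlongrightarrow> 0) U" using def_lim unfolding d_def[abs_def] .
    have Zlim: "((\<lambda>n. nrm (Z n)) \<longlongrightarrow> 0) U"
      using beta_eq g h unfolding ueq_def Z_def c_def Wg_def Wgh_def by simp
    have elim: "((\<lambda>n. e2 n) \<longlongrightarrow> 0) U" "((\<lambda>n. e3 n) \<longlongrightarrow> 0) U"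
    proof -
      have l1: "((\<lambda>n. \<bar>Cg\<bar> * d n) \<longlongrightarrow> 0) U" using tendsto_mult[OF tendsto_const dlim, of "\<bar>Cg\<bar>"] by simp
      have l2: "((\<lambda>n. \<bar>Cgh\<bar> * d n) \<longlongrightarrow> 0) U" using tendsto_mult[OF tendsto_const dlim, of "\<bar>Cgh\<bar>"] by simp
      have b1: "eventually (\<lambda>n. e2 n \<le> \<bar>Cg\<bar> * d n) U"
        using Cg by eventually_elim (unfold e2_def, meson abs_ge_self d0 mult_right_mono order_trans)
      have b2: "eventually (\<lambda>n. e3 n \<le> \<bar>Cgh\<bar> * d n) U"
        using Cgh by eventually_elim (unfold e3_def, meson abs_ge_self d0 mult_right_mono order_trans)
      show "((\<lambda>n. e2 n) \<longlongrightarrow> 0) U"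
        by (rule tendsto_sandwich[OF _ b1 tendsto_const l1]) (simp add: e20)
      show "((\<lambda>n. e3 n) \<longlongrightarrow> 0) U"
        by (rule tendsto_sandwich[OF _ b2 tendsto_const l2]) (simp add: e20)
    qed
    have "(ep \<longlongrightarrow> 0 + Cd * 0 + 0 * Kg * Cd + 2 * Kh * 0 + 0 * Kh * Cd + 0 * K0) U"
      unfolding ep_def[abs_def]
      by (intro tendsto_add tendsto_mult tendsto_const Zlim dlim elim)
    then have eplim: "(ep \<longlongrightarrow> 0) U" by simp
    define eps where "eps n = (if d n > 0 then x n / d n else 0)" for n
    have eps0: "\<forall>n. 0 \<le> eps n" unfolding eps_def using x0 d0 by simp
    have epsle: "eventually (\<lambda>n. eps n \<le> ep n) U"
      using key
    proof eventually_elim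
      fix n assume kn: "x n \<le> d n * ep n"
      show "eps n \<le> ep n"
      proof (cases "d n > 0")
        case True then show ?thesis unfolding eps_def using kn by (simp add: pos_divide_le_eq mult.commute)
      next
        case False then show ?thesis unfolding eps_def using ep0 by simp
      qed
    qed
    have epslim: "(eps \<longlongrightarrow> 0) U"
      by (rule tendsto_sandwich[OF _ epsle tendsto_const eplim]) (simp add: eps0)
    have epseq: "eventually (\<lambda>n. x n = eps n * d n) U"
      using key
    proof eventually_elim
      fix n assume kn: "x n \<le> d n * ep n"
      show "x n = eps n * d n"
      proof (cases "d n > 0")
        case True then show ?thesis unfolding eps_def by simp
      next
        case False then have "d n = 0" using d0[of n] by simp
        then show ?thesis unfolding eps_def using kn x0[of n] by simp
      qed
    qed
    have so: "small_o_U U x d" unfolding small_o_U_def using eps0 epslim epseq by blast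
    have ex: "x = (\<lambda>n. nrm (psi nrm k R \<phi> \<beta> pt n (g \<otimes>\<^bsub>G\<^esub> h) - psi nrm k R \<phi> \<beta> pt n g * psi nrm k R \<phi> \<beta> pt n h))"
      by (rule ext) (simp add: x_def)
    have ed: "d = (\<lambda>n. deficiency nrm (k n) R (\<phi> n))" by (rule ext) (simp add: d_def)
    show ?thesis using so unfolding ex ed .
  qed
qed

end
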